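(* Let $\mathcal{M}=(E,\rho)$ be a $q$-matroid with $\dim E\ge 2$. The following are equivalent: (i) $\mathcal{M}$ is irreducible; (ii) $\mathcal{M}$ is full and there do not exist nonzero subspaces $Z_1,Z_2\in\mathcal{Z}(\mathcal{M})$ such that $E=Z_1\oplus Z_2$ (i.e. $Z_1+Z_2=E$ and $Z_1\cap Z_2=0$), $\rho(Z_1)+\rho(Z_2)=\rho(E)$, and $\{Y_1\oplus Y_2\mid Y_1\in\mathcal{Z}_1,\ Y_2\in\mathcal{Z}_2\}=\mathcal{Z}(\mathcal{M})$, where $\mathcal{Z}_i=\{Z\in\mathcal{Z}(\mathcal{M})\mid Z\le Z_i\}$.
   Context: Let $\mathbb{F}=\mathbb{F}_q$. For a finite-dimensional $\mathbb{F}$-vector space $E$, $\mathcal{L}(E)$ is its subspace lattice. A $q$-matroid is $\mathcal{M}=(E,\rho)$ with $\rho:\mathcal{L}(E)\to\mathbb{Z}_{\ge0}$ satisfying $0\le\rho(V)\le\dim V$, monotonicity, and submodularity $\rho(V+W)+\rho(V\cap W)\le\rho(V)+\rho(W)$. A flat is $F$ with $\rho(F+\langle x\rangle)>\rho(F)$ for all $x\notin F$. The closure is $\mathrm{cl}(V)=\sum\{\langle x\rangle : x\in E,\ \rho(V+\langle x\rangle)=\rho(V)\}$. The cyclic core is $\mathrm{cyc}(V)=\{x\in V\mid\rho(W)=\rho(V)\text{ for all }W\le V\text{ with }W+\langle x\rangle=V\}$; $V$ is cyclic if $\mathrm{cyc}(V)=V$; $\mathcal{Z}(\mathcal{M})$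 is the set of cyclic flats. $\mathcal{M}$ is full if $\mathrm{cl}(0)=0$ and $\mathrm{cyc}(E)=E$. Direct sum: for $q$-matroids $\mathcal{M}_i=(E_i,\rho_i)$ and $E=E_1\oplus E_2$ with projections $\pi_i$, $\mathcal{M}_1\oplus\mathcal{M}_2=(E,\rho)$ with $\rho(V)=\dim V+\min_{X\le V}(\rho_1(\pi_1(X))+\rho_2(\pi_2(X))-\dim X)$; we write $\mathcal{M}=\mathcal{M}_1\oplus\mathcal{M}_2$ when $E$ is the internal direct sum of subspaces $E_1,E_2$ and the rank function of $\mathcal{M}$ equals this one. $\mathcal{M}$ is reducible if $\mathcal{M}=\mathcal{M}_1\oplus\mathcal{M}_2$ for some $q$-matroids $\mathcal{M}_1,\mathcal{M}_2$ with nonzero ground spaces, and irreducible otherwise. *)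

theory Defs
  imports "HOL-Analysis.Cartesian_Space"
begin

text \<open>Ambient space: 'a^'n with 'a a finite field (F_q, q = CARD('a)).
 A q-matroid is given by a ground subspace E of the ambient space and a rank
 function rho on the subspaces of E.\<close>

type_synonym ('a, 'n) vsp = "('a ^ 'n) set"

definition subspaces :: "('a::{field,finite}, 'n::finite) vsp \<Rightarrow> ('a, 'n) vsp set" where
  "subspaces E = {V. vec.subspace V \<and> V \<subseteq> E}"

definition ssum :: "('a::{field,finite}, 'n::finite) vsp \<Rightarrow> ('a, 'n) vsp \<Rightarrow> ('a, 'n) vsp" where
  "ssum V W = {v + w | v w. v \<in> V \<and> w \<in> W}"

definition qmatroid :: "('a::{field,finite}, 'n::finite) vsp \<Rightarrow> (('a, 'n) vsp \<Rightarrow> nat) \<Rightarrow> bool" where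
  "qmatroid E \<rho> \<longleftrightarrow> vec.subspace E
     \<and> (\<forall>V \<in> subspaces E. \<rho> V \<le> vec.dim V)
     \<and> (\<forall>V \<in> subspaces E. \<forall>W \<in> subspaces E. V \<subseteq> W \<longrightarrow> \<rho> V \<le> \<rho> W)
     \<and> (\<forall>V \<in> subspaces E. \<forall>W \<in> subspaces E.
           \<rho> (ssum V W) + \<rho> (V \<inter> W) \<le> \<rho> V + \<rho> W)"

definition flat :: "('a::{field,finite}, 'n::finite) vsp \<Rightarrow> (('a, 'n) vsp \<Rightarrow> nat) \<Rightarrow> ('a, 'n) vsp \<Rightarrow> bool" where
  "flat E \<rho> F \<longleftrightarrow> F \<in> subspaces E \<and>
     (\<forall>x \<in> E - F. \<rho> (ssum F (vec.span {x})) > \<rho> F)"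

definition qclosure :: "('a::{field,finite}, 'n::finite) vsp \<Rightarrow> (('a, 'n) vsp \<Rightarrow> nat) \<Rightarrow> ('a, 'n) vsp \<Rightarrow> ('a, 'n) vsp" where
  "qclosure E \<rho> V = vec.span {x \<in> E. \<rho> (ssum V (vec.span {x})) = \<rho> V}"

definition cyc :: "(('a::{field,finite}, 'n::finite) vsp \<Rightarrow> nat) \<Rightarrow> ('a, 'n) vsp \<Rightarrow> ('a, 'n) vsp" where
  "cyc \<rho> V = {x \<in> V. \<forall>W \<in> subspaces V. ssum W (vec.span {x}) = V \<longrightarrow> \<rho> W = \<rho> V}"

definition cyclic :: "(('a::{field,finite}, 'n::finite) vsp \<Rightarrow> nat) \<Rightarrow> ('a, 'n) vsp \<Rightarrow> bool" where
  "cyclic \<rho> V \<longleftrightarrow> cyc \<rho> V = V"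

definition cyclic_flats :: "('a::{field,finite}, 'n::finite) vsp \<Rightarrow> (('a, 'n) vsp \<Rightarrow> nat) \<Rightarrow> ('a, 'n) vsp set" where
  "cyclic_flats E \<rho> = {Z. flat E \<rho> Z \<and> cyclic \<rho> Z}"

definition full :: "('a::{field,finite}, 'n::finite) vsp \<Rightarrow> (('a, 'n) vsp \<Rightarrow> nat) \<Rightarrow> bool" where
  "full E \<rho> \<longleftrightarrow> qclosure E \<rho> {0} = {0} \<and> cyc \<rho> E = E"

definition internal_dsum :: "('a::{field,finite}, 'n::finite) vsp \<Rightarrow> ('a, 'n) vsp \<Rightarrow> ('a, 'n) vsp \<Rightarrow> bool" where
  "internal_dsum E E1 E2 \<longleftrightarrow> vec.subspace E1 \<and> vec.subspace E2 \<and>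
     ssum E1 E2 = E \<and> E1 \<inter> E2 = {0}"

definition proj1 :: "('a::{field,finite}, 'n::finite) vsp \<Rightarrow> ('a, 'n) vsp \<Rightarrow> 'a ^ 'n \<Rightarrow> 'a ^ 'n" where
  "proj1 E1 E2 x = (THE e. e \<in> E1 \<and> x - e \<in> E2)"

definition proj2 :: "('a::{field,finite}, 'n::finite) vsp \<Rightarrow> ('a, 'n) vsp \<Rightarrow> 'a ^ 'n \<Rightarrow> 'a ^ 'n" where
  "proj2 E1 E2 x = (THE e. e \<in> E2 \<and> x - e \<in> E1)"

definition dsum_rank :: "('a::{field,finite}, 'n::finite) vsp \<Rightarrow> (('a, 'n) vsp \<Rightarrow> nat)
     \<Rightarrow> ('a, 'n) vsp \<Rightarrow> (('a, 'n) vsp \<Rightarrow> nat) \<Rightarrow> ('a, 'n) vsp \<Rightarrow> int" where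
  "dsum_rank E1 \<rho>1 E2 \<rho>2 V = int (vec.dim V) +
     Min {int (\<rho>1 (proj1 E1 E2 ` X)) + int (\<rho>2 (proj2 E1 E2 ` X)) - int (vec.dim X) | X. X \<in> subspaces V}"

definition is_dsum :: "('a::{field,finite}, 'n::finite) vsp \<Rightarrow> (('a, 'n) vsp \<Rightarrow> nat)
     \<Rightarrow> ('a, 'n) vsp \<Rightarrow> (('a, 'n) vsp \<Rightarrow> nat) \<Rightarrow> ('a, 'n) vsp \<Rightarrow> (('a, 'n) vsp \<Rightarrow> nat) \<Rightarrow> bool" where
  "is_dsum E \<rho> E1 \<rho>1 E2 \<rho>2 \<longleftrightarrow> qmatroid E1 \<rho>1 \<and> qmatroid E2 \<rho>2 \<and> internal_dsum E E1 E2 \<and>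
     (\<forall>V \<in> subspaces E. int (\<rho> V) = dsum_rank E1 \<rho>1 E2 \<rho>2 V)"

definition reducible :: "('a::{field,finite}, 'n::finite) vsp \<Rightarrow> (('a, 'n) vsp \<Rightarrow> nat) \<Rightarrow> bool" where
  "reducible E \<rho> \<longleftrightarrow> (\<exists>E1 E2 \<rho>1 \<rho>2. E1 \<noteq> {0} \<and> E2 \<noteq> {0} \<and> is_dsum E \<rho> E1 \<rho>1 E2 \<rho>2)"

definition irreducible_qm :: "('a::{field,finite}, 'n::finite) vsp \<Rightarrow> (('a, 'n) vsp \<Rightarrow> nat) \<Rightarrow> bool" where
  "irreducible_qm E \<rho> \<longleftrightarrow> \<not> reducible E \<rho>"

end

theory Submission
  imports Defs
begin

lemma subspaces_iff: "V \<in> subspaces E \<longleftrightarrow> vec.subspace V \<and> V \<subseteq> E"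
  by (simp add: subspaces_def)

lemma ssum_span: "vec.subspace V \<Longrightarrow> vec.subspace W \<Longrightarrow> ssum V W = vec.span (V \<union> W)"
  unfolding ssum_def vec.span_Un by (simp add: vec.span_eq_iff[THEN iffD2])

lemma subspace_ssum: "vec.subspace V \<Longrightarrow> vec.subspace W \<Longrightarrow> vec.subspace (ssum V W)"
  unfolding ssum_def by (rule vec.subspace_sums)

lemma ssum_ub1: "vec.subspace W \<Longrightarrow> V \<subseteq> ssum V W"
  unfolding ssum_def using vec.subspace_0 by force

lemma ssum_ub2: "vec.subspace V \<Longrightarrow> W \<subseteq> ssum V W"
  unfolding ssum_def using vec.subspace_0 by force

lemma ssum_least: "vec.subspace U \<Longrightarrow> V \<subseteq> U \<Longrightarrow> W \<subseteq> U \<Longrightarrow> ssum V W \<subseteq> U"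
  unfolding ssum_def using vec.subspace_add by blast

lemma ssum_mono: "V \<subseteq> V' \<Longrightarrow> W \<subseteq> W' \<Longrightarrow> ssum V W \<subseteq> ssum V' W'"
  unfolding ssum_def by blast

lemma ssum_comm: "ssum V W = ssum W V"
  unfolding ssum_def by (auto, metis add.commute, metis add.commute)

lemma dim_ssum: "vec.subspace V \<Longrightarrow> vec.subspace W \<Longrightarrow>
   vec.dim (ssum V W) + vec.dim (V \<inter> W) = vec.dim V + vec.dim W"
  unfolding ssum_def by (rule vec.dim_sums_Int)

lemma dim_ssum_le: "vec.subspace V \<Longrightarrow> vec.subspace W \<Longrightarrow>
   vec.dim (ssum V W) \<le> vec.dim V + vec.dim W"
  using dim_ssum by fastforce

lemma dim_span1: "vec.dim (vec.span {x}) \<le> 1"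
  using vec.dim_insert[of x "{}"] by (simp add: vec.dim_span)

lemma dim_span1_nz: "x \<noteq> 0 \<Longrightarrow> vec.dim (vec.span {x}) = 1"
  using vec.dim_insert[of x "{}"] by (simp add: vec.dim_span vec.span_empty)

lemma dim_le: "V \<subseteq> W \<Longrightarrow> vec.dim V \<le> vec.dim W"
  by (rule vec.dim_subset)

lemma dim_eq_sub: "vec.subspace V \<Longrightarrow> vec.subspace W \<Longrightarrow> V \<subseteq> W \<Longrightarrow> vec.dim W \<le> vec.dim V \<Longrightarrow> V = W"
  by (rule vec.subspace_dim_equal)

lemma dim_lt: "vec.subspace V \<Longrightarrow> vec.subspace W \<Longrightarrow> V \<subseteq> W \<Longrightarrow> V \<noteq> W \<Longrightarrow> vec.dim V < vec.dim W"
  using dim_eq_sub not_le by blast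

lemma dim_zero_set: "vec.dim {0::'a::field^'n} = 0"
  using vec.dim_insert[of "0::'a^'n" "{}"] by (simp add: vec.span_zero)

lemma subspace_zero: "vec.subspace {0::'a::field^'n}"
  using vec.subspace_span[of "{}"] by (simp add: vec.span_empty)

lemma dim_zero: "vec.subspace V \<Longrightarrow> vec.dim V = 0 \<Longrightarrow> V = {0}"
  using dim_eq_sub[of "{0}" V] subspace_zero vec.subspace_0 by (metis empty_subsetI insert_subset le0)

lemma span1_sub: "vec.subspace U \<Longrightarrow> x \<in> U \<Longrightarrow> vec.span {x} \<subseteq> U"
  by (simp add: vec.span_minimal)

lemma ssum_single_le: "vec.subspace U \<Longrightarrow> Y \<subseteq> U \<Longrightarrow> x \<in> U \<Longrightarrow> ssum Y (vec.span {x}) \<subseteq> U"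
  by (simp add: ssum_least span1_sub)

lemma in_ssum_single: "vec.subspace Y \<Longrightarrow> x \<in> ssum Y (vec.span {x})"
  using ssum_ub2[of Y "vec.span {x}"] vec.span_base[of x "{x}"] by blast

lemma ssum_0_left: "vec.subspace W \<Longrightarrow> ssum {0} W = W"
  unfolding ssum_def by auto

lemma dim_ssum_single: "vec.subspace V \<Longrightarrow> vec.dim (ssum V (vec.span {x})) \<le> vec.dim V + 1"
  using dim_ssum_le[of V "vec.span {x}"] dim_span1[of x] vec.subspace_span by fastforce

lemma dim_ssum_single_notin: "vec.subspace V \<Longrightarrow> x \<notin> V \<Longrightarrow> vec.dim (ssum V (vec.span {x})) = vec.dim V + 1"
proof -
  assume V: "vec.subspace V" and x: "x \<notin> V"
  have s: "vec.subspace (ssum V (vec.span {x}))" using V subspace_ssum vec.subspace_span by blast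
  have "V \<subseteq> ssum V (vec.span {x})" using ssum_ub1 vec.subspace_span by blast
  moreover have "V \<noteq> ssum V (vec.span {x})" using in_ssum_single[OF V, of x] x by blast
  ultimately have "vec.dim V < vec.dim (ssum V (vec.span {x}))" using dim_lt V s by blast
  then show ?thesis using dim_ssum_single[OF V, of x] by linarith
qed

lemma ext_basis:
  assumes A: "vec.subspace A" and B: "vec.subspace B" and AB: "A \<subseteq> B"
  shows "\<exists>bA bB. bA \<subseteq> bB \<and> vec.independent bB \<and> vec.span bA = A \<and> vec.span bB = B \<and>
     finite bB \<and> card bA = vec.dim A \<and> card bB = vec.dim B"
proof -
  obtain bA where bA: "bA \<subseteq> A" "vec.independent bA" "A \<subseteq> vec.span bA" "card bA = vec.dim A"
    using vec.basis_exists[of A] by blast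
  obtain bB where bB: "bA \<subseteq> bB" "bB \<subseteq> B" "vec.independent bB" "B \<subseteq> vec.span bB"
    using vec.maximal_independent_subset_extend[of bA B] bA AB by blast
  have sA: "vec.span bA = A" using bA A by (meson subset_antisym vec.span_minimal)
  have sB: "vec.span bB = B" using bB B by (meson subset_antisym vec.span_minimal)
  have fB: "finite bB" using bB vec.finiteI_independent by blast
  have cB: "card bB = vec.dim B" using vec.dim_span_eq_card_independent[OF bB(3)] sB by simp
  show ?thesis using bA bB sA sB fB cB by blast
qed

lemma complement_exists:
  assumes A: "vec.subspace A" and B: "vec.subspace B" and AB: "A \<subseteq> B"
  shows "\<exists>C. vec.subspace C \<and> C \<subseteq> B \<and> ssum A C = B \<and> vec.dim C + vec.dim A \<le> vec.dim B"
proof -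
  obtain bA bB where b: "bA \<subseteq> bB" "vec.independent bB" "vec.span bA = A" "vec.span bB = B"
     "finite bB" "card bA = vec.dim A" "card bB = vec.dim B"
    using ext_basis[OF A B AB] by blast
  define C where "C = vec.span (bB - bA)"
  have sC: "vec.subspace C" unfolding C_def by (rule vec.subspace_span)
  have "ssum A C = vec.span (bA \<union> (bB - bA))"
    unfolding ssum_def C_def vec.span_Un b(3) by simp
  also have "\<dots> = B" using b by (simp add: Un_absorb1 Un_Diff_cancel)
  finally have e: "ssum A C = B" .
  have CB: "C \<subseteq> B" using e ssum_ub2[OF A] by blast
  have "vec.dim C \<le> card (bB - bA)" unfolding C_def
    using vec.dim_le_card[of "vec.span (bB - bA)" "bB - bA"] b(5) by (simp add: vec.dim_span vec.dim_le_card')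
  also have "\<dots> = card bB - card bA" using b by (meson card_Diff_subset finite_subset)
  finally have dC: "vec.dim C \<le> card bB - card bA" .
  have "card bA \<le> card bB" using b(1,5) card_mono by blast
  then have "vec.dim C + vec.dim A \<le> vec.dim B" using dC b(6,7) by linarith
  then show ?thesis using sC CB e by blast
qed

lemma hyperplane_exists:
  assumes U: "vec.subspace U" and Y: "vec.subspace Y" and UY: "U \<subseteq> Y" "U \<noteq> Y"
  shows "\<exists>H x. vec.subspace H \<and> U \<subseteq> H \<and> H \<subseteq> Y \<and> H \<noteq> Y \<and> x \<in> Y \<and> ssum H (vec.span {x}) = Y"
proof -
  obtain bA bB where b: "bA \<subseteq> bB" "vec.independent bB" "vec.span bA = U" "vec.span bB = Y"
     "finite bB" "card bA = vec.dim U" "card bB = vec.dim Y"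
    using ext_basis[OF U Y UY(1)] by blast
  have "bA \<noteq> bB" using b UY by auto
  then obtain x where x: "x \<in> bB" "x \<notin> bA" using b by blast
  define H where "H = vec.span (bB - {x})"
  have sH: "vec.subspace H" unfolding H_def by (rule vec.subspace_span)
  have UH: "U \<subseteq> H" unfolding H_def using b x by (metis Diff_empty subset_Diff_insert vec.span_mono)
  have HY: "H \<subseteq> Y" unfolding H_def using b by (metis Diff_subset vec.span_mono)
  have xY: "x \<in> Y" using b x vec.span_base by blast
  have xH: "x \<notin> H" unfolding H_def using b(2) x(1) vec.dependent_def by blast
  have "ssum H (vec.span {x}) = vec.span ((bB - {x}) \<union> {x})"
    unfolding ssum_def H_def vec.span_Un by simp
  also have "\<dots> = Y" using b x by (metis Un_insert_right insert_Diff sup_bot.right_neutral)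
  finally show ?thesis using sH UH HY xY xH by blast
qed


lemma qm_E: "qmatroid E \<rho> \<Longrightarrow> vec.subspace E"
  by (simp add: qmatroid_def)

lemma qm_dim: "qmatroid E \<rho> \<Longrightarrow> V \<in> subspaces E \<Longrightarrow> \<rho> V \<le> vec.dim V"
  by (simp add: qmatroid_def)

lemma qm_mono: "qmatroid E \<rho> \<Longrightarrow> V \<in> subspaces E \<Longrightarrow> W \<in> subspaces E \<Longrightarrow> V \<subseteq> W \<Longrightarrow> \<rho> V \<le> \<rho> W"
  by (simp add: qmatroid_def)

lemma qm_submod: "qmatroid E \<rho> \<Longrightarrow> V \<in> subspaces E \<Longrightarrow> W \<in> subspaces E \<Longrightarrow>
   \<rho> (ssum V W) + \<rho> (V \<inter> W) \<le> \<rho> V + \<rho> W"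
  by (simp add: qmatroid_def)

lemma qm_submod_le: "qmatroid E \<rho> \<Longrightarrow> V \<in> subspaces E \<Longrightarrow> W \<in> subspaces E \<Longrightarrow>
   \<rho> (ssum V W) \<le> \<rho> V + \<rho> W"
  using qm_submod by fastforce

lemma zero_sub: "vec.subspace E \<Longrightarrow> {0} \<in> subspaces E"
  using subspace_zero vec.subspace_0 by (auto simp: subspaces_iff)

lemma qm_zero: "qmatroid E \<rho> \<Longrightarrow> \<rho> {0} = 0"
  using qm_dim[of E \<rho> "{0}"] zero_sub[of E] qm_E dim_zero_set by fastforce

lemma ssum_sub: "V \<in> subspaces E \<Longrightarrow> W \<in> subspaces E \<Longrightarrow> vec.subspace E \<Longrightarrow> ssum V W \<in> subspaces E"
  by (simp add: subspaces_iff subspace_ssum ssum_least)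

lemma inter_sub: "V \<in> subspaces E \<Longrightarrow> W \<in> subspaces E \<Longrightarrow> V \<inter> W \<in> subspaces E"
  by (auto simp: subspaces_iff vec.subspace_inter)

lemma span1_subs: "vec.subspace E \<Longrightarrow> x \<in> E \<Longrightarrow> vec.span {x} \<in> subspaces E"
  by (simp add: subspaces_iff vec.subspace_span span1_sub)

lemma subs_trans: "V \<in> subspaces W \<Longrightarrow> W \<in> subspaces E \<Longrightarrow> V \<in> subspaces E"
  by (auto simp: subspaces_iff)

lemma qm_restrict:
  assumes qm: "qmatroid E \<rho>" and Z: "Z \<in> subspaces E"
  shows "qmatroid Z \<rho>"
proof -
  have sub: "\<And>V. V \<in> subspaces Z \<Longrightarrow> V \<in> subspaces E" using Z subs_trans by blast
  have sZ: "vec.subspace Z" using Z by (simp add: subspaces_iff)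
  show ?thesis unfolding qmatroid_def
  proof (intro conjI ballI impI sZ)
    fix V W assume V: "V \<in> subspaces Z" and W: "W \<in> subspaces Z"
    show "\<rho> V \<le> vec.dim V" using qm_dim[OF qm sub[OF V]] .
    show "\<rho> (ssum V W) + \<rho> (V \<inter> W) \<le> \<rho> V + \<rho> W" using qm_submod[OF qm sub[OF V] sub[OF W]] .
    assume "V \<subseteq> W" then show "\<rho> V \<le> \<rho> W" using qm_mono[OF qm sub[OF V] sub[OF W]] by blast
  qed
qed

lemma qm_R2:
  assumes qm: "qmatroid E \<rho>" and A: "A \<in> subspaces E" and B: "B \<in> subspaces E" and AB: "A \<subseteq> B"
  shows "\<rho> B + vec.dim A \<le> \<rho> A + vec.dim B"
proof -
  obtain C where C: "vec.subspace C" "C \<subseteq> B" "ssum A C = B" "vec.dim C + vec.dim A \<le> vec.dim B"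
    using complement_exists[of A B] A B AB by (auto simp: subspaces_iff)
  have CE: "C \<in> subspaces E" using C B by (auto simp: subspaces_iff)
  have "\<rho> B \<le> \<rho> A + \<rho> C" using qm_submod_le[OF qm A CE] C by simp
  moreover have "\<rho> C \<le> vec.dim C" using qm_dim[OF qm CE] .
  ultimately show ?thesis using C by linarith
qed

lemma qm_span1: "qmatroid E \<rho> \<Longrightarrow> x \<in> E \<Longrightarrow> \<rho> (vec.span {x}) \<le> 1"
  using qm_dim[of E \<rho> "vec.span {x}"] span1_subs[of E x] qm_E dim_span1[of x] by fastforce

lemma ssum_self: "vec.subspace V \<Longrightarrow> ssum V V = V"
  using ssum_least[of V V V] ssum_ub1[of V V] by blast

lemma cyclic_strict:
  assumes qm: "qmatroid E \<rho>" and Z: "Z \<in> subspaces E" and cy: "cyclic \<rho> Z"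
    and U: "vec.subspace U" "U \<subseteq> Z" "U \<noteq> Z"
  shows "\<rho> Z + vec.dim U + 1 \<le> \<rho> U + vec.dim Z"
proof -
  have sZ: "vec.subspace Z" using Z by (simp add: subspaces_iff)
  obtain H x where H: "vec.subspace H" "U \<subseteq> H" "H \<subseteq> Z" "H \<noteq> Z" "x \<in> Z" "ssum H (vec.span {x}) = Z"
    using hyperplane_exists[OF U(1) sZ U(2,3)] by blast
  have "x \<in> cyc \<rho> Z" using cy H(5) by (simp add: cyclic_def)
  moreover have "H \<in> subspaces Z" using H by (simp add: subspaces_iff)
  ultimately have rH: "\<rho> H = \<rho> Z" using H(6) unfolding cyc_def by blast
  have "vec.dim H < vec.dim Z" using dim_lt H sZ by blast
  moreover have "vec.dim Z \<le> vec.dim H + 1" using dim_ssum_single[OF H(1), of x] H(6) by simp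
  moreover have "\<rho> H + vec.dim U \<le> \<rho> U + vec.dim H"
    using qm_R2[OF qm, of U H] U H Z by (auto simp: subspaces_iff)
  ultimately show ?thesis using rH by linarith
qed

lemma strict_cyclic:
  assumes qm: "qmatroid E \<rho>" and Z: "Z \<in> subspaces E"
    and st: "\<And>U. vec.subspace U \<Longrightarrow> U \<subseteq> Z \<Longrightarrow> U \<noteq> Z \<Longrightarrow> \<rho> Z + vec.dim U + 1 \<le> \<rho> U + vec.dim Z"
  shows "cyclic \<rho> Z"
  unfolding cyclic_def cyc_def
proof (intro subset_antisym subsetI CollectI conjI ballI impI)
  fix x W assume x: "x \<in> Z" and W: "W \<in> subspaces Z" and e: "ssum W (vec.span {x}) = Z"
  have sW: "vec.subspace W" "W \<subseteq> Z" using W by (auto simp: subspaces_iff)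
  have WE: "W \<in> subspaces E" using W Z subs_trans by blast
  show "\<rho> W = \<rho> Z"
  proof (cases "W = Z")
    case False
    have "\<rho> Z + vec.dim W + 1 \<le> \<rho> W + vec.dim Z" using st sW False by blast
    moreover have "vec.dim Z \<le> vec.dim W + 1" using dim_ssum_single[OF sW(1), of x] e by simp
    moreover have "\<rho> W \<le> \<rho> Z" using qm_mono[OF qm WE Z sW(2)] .
    ultimately show ?thesis by linarith
  qed simp
qed auto

lemma rank_cf:
  assumes qm: "qmatroid E \<rho>" and V: "V \<in> subspaces E"
  shows "\<exists>Z \<in> cyclic_flats E \<rho>. \<rho> Z + vec.dim (ssum V Z) \<le> \<rho> V + vec.dim Z"
proof -
  have sE: "vec.subspace E" using qm_E[OF qm] .
  have sV: "vec.subspace V" using V by (simp add: subspaces_iff)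
  define T where "T = (\<lambda>Z. Z \<in> subspaces E \<and> \<rho> Z + vec.dim (ssum V Z) \<le> \<rho> V + vec.dim Z)"
  define g where "g = (\<lambda>Z. 2 * \<rho> Z + (vec.dim E - vec.dim Z))"
  have "T V" unfolding T_def using V ssum_self[OF sV] by simp
  then obtain Z where TZ: "T Z" and minZ: "\<And>Y. T Y \<Longrightarrow> g Z \<le> g Y"
    using ex_has_least_nat[of T V g] by blast
  have ZE: "Z \<in> subspaces E" and sZ: "vec.subspace Z" and ZsE: "Z \<subseteq> E"
    using TZ by (auto simp: T_def subspaces_iff)
  have dZE: "vec.dim Z \<le> vec.dim E" using dim_le ZsE .
  have fl: "flat E \<rho> Z"
    unfolding flat_def
  proof (intro conjI ballI ZE)
    fix x assume x: "x \<in> E - Z"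
    show "\<rho> Z < \<rho> (ssum Z (vec.span {x}))"
    proof (rule ccontr)
      assume nl: "\<not> ?thesis"
      define Z' where "Z' = ssum Z (vec.span {x})"
      have Z'E: "Z' \<in> subspaces E" unfolding Z'_def using ssum_sub[OF ZE span1_subs[OF sE, of x] sE] x by blast
      have "Z \<subseteq> Z'" unfolding Z'_def using ssum_ub1 vec.subspace_span by blast
      then have rZ': "\<rho> Z' = \<rho> Z" using qm_mono[OF qm ZE Z'E] nl Z'_def by fastforce
      have dZ': "vec.dim Z' = vec.dim Z + 1" unfolding Z'_def using dim_ssum_single_notin[OF sZ] x by blast
      have sVZ: "vec.subspace (ssum V Z)" using subspace_ssum sV sZ by blast
      have sVZx: "vec.subspace (ssum (ssum V Z) (vec.span {x}))"
        using subspace_ssum[OF sVZ vec.subspace_span] .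
      have "ssum V Z' \<subseteq> ssum (ssum V Z) (vec.span {x})"
        unfolding Z'_def
      proof (rule ssum_least[OF sVZx])
        show "V \<subseteq> ssum (ssum V Z) (vec.span {x})"
          using ssum_ub1[OF sZ, of V] ssum_ub1[OF vec.subspace_span, of "ssum V Z" "{x}"] by blast
        show "ssum Z (vec.span {x}) \<subseteq> ssum (ssum V Z) (vec.span {x})"
          using ssum_mono[OF ssum_ub2[OF sV, of Z], of "vec.span {x}" "vec.span {x}"] by blast
      qed
      then have "vec.dim (ssum V Z') \<le> vec.dim (ssum V Z) + 1"
        using dim_le dim_ssum_single[OF sVZ, of x] order_trans by blast
      then have "T Z'" unfolding T_def using Z'E rZ' dZ' TZ[unfolded T_def] by linarith
      moreover have "vec.dim Z' \<le> vec.dim E" using Z'E dim_le by (auto simp: subspaces_iff)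
      ultimately show False using minZ[of Z'] rZ' dZ' unfolding g_def by linarith
    qed
  qed
  have cy: "cyclic \<rho> Z"
    unfolding cyclic_def cyc_def
  proof (intro subset_antisym subsetI CollectI conjI ballI impI)
    fix x W assume x: "x \<in> Z" and W: "W \<in> subspaces Z" and e: "ssum W (vec.span {x}) = Z"
    have sW: "vec.subspace W" "W \<subseteq> Z" using W by (auto simp: subspaces_iff)
    have WE: "W \<in> subspaces E" using W ZE subs_trans by blast
    show "\<rho> W = \<rho> Z"
    proof (rule ccontr)
      assume ne: "\<rho> W \<noteq> \<rho> Z"
      then have "W \<noteq> Z" by blast
      then have "vec.dim W < vec.dim Z" using dim_lt sW sZ by blast
      moreover have "vec.dim Z \<le> vec.dim W + 1" using dim_ssum_single[OF sW(1), of x] e by simp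
      moreover have "\<rho> W \<le> \<rho> Z" using qm_mono[OF qm WE ZE sW(2)] .
      moreover have "\<rho> Z + vec.dim W \<le> \<rho> W + vec.dim Z" using qm_R2[OF qm WE ZE sW(2)] .
      moreover have "vec.dim (ssum V W) \<le> vec.dim (ssum V Z)" using dim_le ssum_mono[OF order_refl sW(2)] by blast
      ultimately have r1: "\<rho> W + 1 = \<rho> Z" and d1: "vec.dim W + 1 = vec.dim Z"
        and d2: "vec.dim (ssum V W) \<le> vec.dim (ssum V Z)" using ne by linarith+
      have "T W" unfolding T_def using WE TZ[unfolded T_def] r1 d1 d2 by linarith
      moreover have "g W < g Z" unfolding g_def using r1 d1 dZE by linarith
      ultimately show False using minZ[of W] by linarith
    qed
  qed auto
  show ?thesis using fl cy TZ unfolding cyclic_flats_def T_def by blast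
qed


lemma ids_E1: "internal_dsum E E1 E2 \<Longrightarrow> vec.subspace E1" by (simp add: internal_dsum_def)
lemma ids_E2: "internal_dsum E E1 E2 \<Longrightarrow> vec.subspace E2" by (simp add: internal_dsum_def)
lemma ids_sum: "internal_dsum E E1 E2 \<Longrightarrow> ssum E1 E2 = E" by (simp add: internal_dsum_def)
lemma ids_int: "internal_dsum E E1 E2 \<Longrightarrow> E1 \<inter> E2 = {0}" by (simp add: internal_dsum_def)
lemma ids_E: assumes D: "internal_dsum E E1 E2" shows "vec.subspace E"
proof -
  have "vec.subspace (ssum E1 E2)" using subspace_ssum ids_E1[OF D] ids_E2[OF D] by blast
  then show ?thesis using ids_sum[OF D] by simp
qed
lemma ids_E1E: assumes D: "internal_dsum E E1 E2" shows "E1 \<subseteq> E"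
  using ssum_ub1[OF ids_E2[OF D], of E1] ids_sum[OF D] by simp
lemma ids_E2E: assumes D: "internal_dsum E E1 E2" shows "E2 \<subseteq> E"
  using ssum_ub2[OF ids_E1[OF D], of E2] ids_sum[OF D] by simp
lemma ids_E1s: "internal_dsum E E1 E2 \<Longrightarrow> E1 \<in> subspaces E"
  by (simp add: subspaces_iff ids_E1 ids_E1E)
lemma ids_E2s: "internal_dsum E E1 E2 \<Longrightarrow> E2 \<in> subspaces E"
  by (simp add: subspaces_iff ids_E2 ids_E2E)

lemma proj1_unique:
  assumes D: "internal_dsum E E1 E2" and a: "a \<in> E1" "x - a \<in> E2"
  shows "proj1 E1 E2 x = a"
  unfolding proj1_def
proof (rule the_equality)
  show "a \<in> E1 \<and> x - a \<in> E2" using a by blast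
  fix e assume e: "e \<in> E1 \<and> x - e \<in> E2"
  have "e - a \<in> E1" using e a ids_E1[OF D] vec.subspace_diff by blast
  moreover have "e - a = (x - a) - (x - e)" by simp
  then have "e - a \<in> E2" using e a ids_E2[OF D] vec.subspace_diff by metis
  ultimately have "e - a \<in> {0}" using ids_int[OF D] by blast
  then show "e = a" by simp
qed

lemma proj2_unique:
  assumes D: "internal_dsum E E1 E2" and a: "b \<in> E2" "x - b \<in> E1"
  shows "proj2 E1 E2 x = b"
  unfolding proj2_def
proof (rule the_equality)
  show "b \<in> E2 \<and> x - b \<in> E1" using a by blast
  fix e assume e: "e \<in> E2 \<and> x - e \<in> E1"
  have "e - b \<in> E2" using e a ids_E2[OF D] vec.subspace_diff by blast
  moreover have "e - b = (x - b) - (x - e)" by simp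
  then have "e - b \<in> E1" using e a ids_E1[OF D] vec.subspace_diff by metis
  ultimately have "e - b \<in> {0}" using ids_int[OF D] by blast
  then show "e = b" by simp
qed

lemma proj_of_sum:
  assumes D: "internal_dsum E E1 E2" and a: "a \<in> E1" and b: "b \<in> E2"
  shows "proj1 E1 E2 (a + b) = a" "proj2 E1 E2 (a + b) = b"
  using proj1_unique[OF D a, of "a + b"] proj2_unique[OF D b, of "a + b"] a b by simp_all

lemma proj_decomp:
  assumes D: "internal_dsum E E1 E2" and x: "x \<in> E"
  shows "proj1 E1 E2 x \<in> E1" "proj2 E1 E2 x \<in> E2" "proj1 E1 E2 x + proj2 E1 E2 x = x"
proof -
  obtain a b where ab: "a \<in> E1" "b \<in> E2" "x = a + b"
    using x ids_sum[OF D] unfolding ssum_def by blast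
  show "proj1 E1 E2 x \<in> E1" "proj2 E1 E2 x \<in> E2" "proj1 E1 E2 x + proj2 E1 E2 x = x"
    using proj_of_sum[OF D ab(1,2)] ab by simp_all
qed

lemma proj_E1:
  assumes D: "internal_dsum E E1 E2" and x: "x \<in> E1"
  shows "proj1 E1 E2 x = x" "proj2 E1 E2 x = 0"
  using proj_of_sum[OF D x vec.subspace_0[OF ids_E2[OF D]]] by simp_all

lemma proj_E2:
  assumes D: "internal_dsum E E1 E2" and x: "x \<in> E2"
  shows "proj1 E1 E2 x = 0" "proj2 E1 E2 x = x"
  using proj_of_sum[OF D vec.subspace_0[OF ids_E1[OF D]] x] by simp_all

lemma proj_add:
  assumes D: "internal_dsum E E1 E2" and x: "x \<in> E" and y: "y \<in> E"
  shows "proj1 E1 E2 (x + y) = proj1 E1 E2 x + proj1 E1 E2 y"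
        "proj2 E1 E2 (x + y) = proj2 E1 E2 x + proj2 E1 E2 y"
proof -
  let ?a = "proj1 E1 E2 x + proj1 E1 E2 y" and ?b = "proj2 E1 E2 x + proj2 E1 E2 y"
  have a: "?a \<in> E1" using proj_decomp[OF D x] proj_decomp[OF D y] ids_E1[OF D] vec.subspace_add by blast
  have b: "?b \<in> E2" using proj_decomp[OF D x] proj_decomp[OF D y] ids_E2[OF D] vec.subspace_add by blast
  have e: "x + y = ?a + ?b" using proj_decomp(3)[OF D x] proj_decomp(3)[OF D y] by (simp add: algebra_simps)
  show "proj1 E1 E2 (x + y) = ?a" "proj2 E1 E2 (x + y) = ?b"
    using proj_of_sum[OF D a b] e by simp_all
qed

lemma proj_scale:
  assumes D: "internal_dsum E E1 E2" and x: "x \<in> E"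
  shows "proj1 E1 E2 (c *s x) = c *s proj1 E1 E2 x"
        "proj2 E1 E2 (c *s x) = c *s proj2 E1 E2 x"
proof -
  let ?a = "c *s proj1 E1 E2 x" and ?b = "c *s proj2 E1 E2 x"
  have a: "?a \<in> E1" using proj_decomp[OF D x] ids_E1[OF D] vec.subspace_scale by blast
  have b: "?b \<in> E2" using proj_decomp[OF D x] ids_E2[OF D] vec.subspace_scale by blast
  have e: "c *s x = ?a + ?b" using proj_decomp(3)[OF D x]
    by (metis vec.scale_right_distrib)
  show "proj1 E1 E2 (c *s x) = ?a" "proj2 E1 E2 (c *s x) = ?b"
    using proj_of_sum[OF D a b] e by simp_all
qed

lemma proj1_img_sub:
  assumes D: "internal_dsum E E1 E2" and X: "X \<in> subspaces E"
  shows "proj1 E1 E2 ` X \<in> subspaces E1"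
proof -
  have sX: "vec.subspace X" and XE: "X \<subseteq> E" using X by (auto simp: subspaces_iff)
  have "vec.subspace (proj1 E1 E2 ` X)"
    unfolding vec.subspace_def
  proof (intro conjI ballI allI)
    show "0 \<in> proj1 E1 E2 ` X"
      using proj_E1(1)[OF D vec.subspace_0[OF ids_E1[OF D]]] vec.subspace_0[OF sX] by force
  next
    fix u v assume "u \<in> proj1 E1 E2 ` X" "v \<in> proj1 E1 E2 ` X"
    then obtain x y where xy: "x \<in> X" "y \<in> X" "u = proj1 E1 E2 x" "v = proj1 E1 E2 y" by blast
    then have "x + y \<in> X" using vec.subspace_add[OF sX] by blast
    moreover have "proj1 E1 E2 (x + y) = u + v" using proj_add(1)[OF D, of x y] XE xy by blast
    ultimately show "u + v \<in> proj1 E1 E2 ` X" by (metis image_eqI)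
  next
    fix c u assume "u \<in> proj1 E1 E2 ` X"
    then obtain x where xy: "x \<in> X" "u = proj1 E1 E2 x" by blast
    then have "c *s x \<in> X" using vec.subspace_scale[OF sX] by blast
    moreover have "proj1 E1 E2 (c *s x) = c *s u" using proj_scale(1)[OF D, of x c] XE xy by blast
    ultimately show "c *s u \<in> proj1 E1 E2 ` X" by (metis image_eqI)
  qed
  moreover have "proj1 E1 E2 ` X \<subseteq> E1" using proj_decomp(1)[OF D] XE by blast
  ultimately show ?thesis by (simp add: subspaces_iff)
qed

lemma proj2_img_sub:
  assumes D: "internal_dsum E E1 E2" and X: "X \<in> subspaces E"
  shows "proj2 E1 E2 ` X \<in> subspaces E2"
proof -
  have sX: "vec.subspace X" and XE: "X \<subseteq> E" using X by (auto simp: subspaces_iff)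
  have "vec.subspace (proj2 E1 E2 ` X)"
    unfolding vec.subspace_def
  proof (intro conjI ballI allI)
    show "0 \<in> proj2 E1 E2 ` X"
      using proj_E1(2)[OF D vec.subspace_0[OF ids_E1[OF D]]] vec.subspace_0[OF sX] by force
  next
    fix u v assume "u \<in> proj2 E1 E2 ` X" "v \<in> proj2 E1 E2 ` X"
    then obtain x y where xy: "x \<in> X" "y \<in> X" "u = proj2 E1 E2 x" "v = proj2 E1 E2 y" by blast
    then have "x + y \<in> X" using vec.subspace_add[OF sX] by blast
    moreover have "proj2 E1 E2 (x + y) = u + v" using proj_add(2)[OF D, of x y] XE xy by blast
    ultimately show "u + v \<in> proj2 E1 E2 ` X" by (metis image_eqI)
  next
    fix c u assume "u \<in> proj2 E1 E2 ` X"
    then obtain x where xy: "x \<in> X" "u = proj2 E1 E2 x" by blast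
    then have "c *s x \<in> X" using vec.subspace_scale[OF sX] by blast
    moreover have "proj2 E1 E2 (c *s x) = c *s u" using proj_scale(2)[OF D, of x c] XE xy by blast
    ultimately show "c *s u \<in> proj2 E1 E2 ` X" by (metis image_eqI)
  qed
  moreover have "proj2 E1 E2 ` X \<subseteq> E2" using proj_decomp(2)[OF D] XE by blast
  ultimately show ?thesis by (simp add: subspaces_iff)
qed

lemma proj_img_subsE:
  assumes D: "internal_dsum E E1 E2" and X: "X \<in> subspaces E"
  shows "proj1 E1 E2 ` X \<in> subspaces E" "proj2 E1 E2 ` X \<in> subspaces E"
  using proj1_img_sub[OF D X] proj2_img_sub[OF D X] ids_E1E[OF D] ids_E2E[OF D]
  by (auto simp: subspaces_iff)

lemma proj_cover:
  assumes D: "internal_dsum E E1 E2" and X: "X \<subseteq> E"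
  shows "X \<subseteq> ssum (proj1 E1 E2 ` X) (proj2 E1 E2 ` X)"
proof
  fix x assume x: "x \<in> X"
  then have "x = proj1 E1 E2 x + proj2 E1 E2 x" using proj_decomp(3)[OF D] X by auto
  moreover have "proj1 E1 E2 x \<in> proj1 E1 E2 ` X" "proj2 E1 E2 x \<in> proj2 E1 E2 ` X" using x by blast+
  ultimately show "x \<in> ssum (proj1 E1 E2 ` X) (proj2 E1 E2 ` X)" unfolding ssum_def by blast
qed

lemma proj_in_parts:
  assumes D: "internal_dsum E E1 E2" and Y: "Y1 \<subseteq> E1" "Y2 \<subseteq> E2" and x: "x \<in> ssum Y1 Y2"
  shows "proj1 E1 E2 x \<in> Y1" "proj2 E1 E2 x \<in> Y2"
proof -
  obtain a b where "a \<in> Y1" "b \<in> Y2" "x = a + b" using x unfolding ssum_def by blast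
  moreover then have "a \<in> E1" "b \<in> E2" using Y by blast+
  ultimately show "proj1 E1 E2 x \<in> Y1" "proj2 E1 E2 x \<in> Y2" using proj_of_sum[OF D] by simp_all
qed

lemma proj_img_parts:
  assumes D: "internal_dsum E E1 E2" and Y: "Y1 \<subseteq> E1" "Y2 \<subseteq> E2" and X: "X \<subseteq> ssum Y1 Y2"
  shows "proj1 E1 E2 ` X \<subseteq> Y1" "proj2 E1 E2 ` X \<subseteq> Y2"
  using proj_in_parts[OF D Y] X by blast+

lemma dim_parts:
  assumes D: "internal_dsum E E1 E2" and Y: "vec.subspace Y1" "vec.subspace Y2" "Y1 \<subseteq> E1" "Y2 \<subseteq> E2"
  shows "vec.dim (ssum Y1 Y2) = vec.dim Y1 + vec.dim Y2"
proof -
  have "Y1 \<inter> Y2 = {0}" using ids_int[OF D] Y vec.subspace_0 by blast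
  then show ?thesis using dim_ssum[OF Y(1,2)] dim_zero_set by simp
qed

lemma dim_proj:
  assumes D: "internal_dsum E E1 E2" and X: "X \<in> subspaces E"
  shows "vec.dim X \<le> vec.dim (proj1 E1 E2 ` X) + vec.dim (proj2 E1 E2 ` X)"
proof -
  have "vec.dim X \<le> vec.dim (ssum (proj1 E1 E2 ` X) (proj2 E1 E2 ` X))"
    using dim_le proj_cover[OF D] X by (auto simp: subspaces_iff)
  also have "\<dots> \<le> vec.dim (proj1 E1 E2 ` X) + vec.dim (proj2 E1 E2 ` X)"
    using dim_ssum_le proj1_img_sub[OF D X] proj2_img_sub[OF D X] by (auto simp: subspaces_iff)
  finally show ?thesis .
qed

lemma proj_img_E1:
  assumes D: "internal_dsum E E1 E2" and X: "X \<in> subspaces E1"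
  shows "proj1 E1 E2 ` X = X" "proj2 E1 E2 ` X = {0}"
proof -
  have "X \<subseteq> E1" "0 \<in> X" using X vec.subspace_0 by (auto simp: subspaces_iff)
  then show "proj1 E1 E2 ` X = X" "proj2 E1 E2 ` X = {0}" using proj_E1[OF D] by force+
qed

lemma proj_img_E2:
  assumes D: "internal_dsum E E1 E2" and X: "X \<in> subspaces E2"
  shows "proj1 E1 E2 ` X = {0}" "proj2 E1 E2 ` X = X"
proof -
  have "X \<subseteq> E2" "0 \<in> X" using X vec.subspace_0 by (auto simp: subspaces_iff)
  then show "proj1 E1 E2 ` X = {0}" "proj2 E1 E2 ` X = X" using proj_E2[OF D] by force+
qed


lemma finite_sets: "finite {X :: ('a::{field,finite}^'n::finite) set. P X}"
  by (rule finite_subset[OF subset_UNIV]) simp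

lemma dsum_facts:
  assumes ds: "is_dsum E \<rho> E1 \<rho>1 E2 \<rho>2" and V: "V \<in> subspaces E"
  shows "\<And>X. X \<in> subspaces V \<Longrightarrow> \<rho> V + vec.dim X \<le> \<rho>1 (proj1 E1 E2 ` X) + \<rho>2 (proj2 E1 E2 ` X) + vec.dim V"
    and "\<exists>X \<in> subspaces V. \<rho> V + vec.dim X = \<rho>1 (proj1 E1 E2 ` X) + \<rho>2 (proj2 E1 E2 ` X) + vec.dim V"
proof -
  let ?f = "\<lambda>X. int (\<rho>1 (proj1 E1 E2 ` X)) + int (\<rho>2 (proj2 E1 E2 ` X)) - int (vec.dim X)"
  let ?S = "{?f X | X. X \<in> subspaces V}"
  have eq: "int (\<rho> V) = int (vec.dim V) + Min ?S" using ds V unfolding is_dsum_def dsum_rank_def by blast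
  have fin: "finite ?S" by (rule finite_image_set) (rule finite_sets)
  have "V \<in> subspaces V" using V by (simp add: subspaces_iff)
  then have ne: "?S \<noteq> {}" by blast
  fix X assume X: "X \<in> subspaces V"
  then have "Min ?S \<le> ?f X" using fin by (intro Min_le) blast+
  then show "\<rho> V + vec.dim X \<le> \<rho>1 (proj1 E1 E2 ` X) + \<rho>2 (proj2 E1 E2 ` X) + vec.dim V" using eq by linarith
next
  let ?f = "\<lambda>X. int (\<rho>1 (proj1 E1 E2 ` X)) + int (\<rho>2 (proj2 E1 E2 ` X)) - int (vec.dim X)"
  let ?S = "{?f X | X. X \<in> subspaces V}"
  have eq: "int (\<rho> V) = int (vec.dim V) + Min ?S" using ds V unfolding is_dsum_def dsum_rank_def by blast
  have fin: "finite ?S" by (rule finite_image_set) (rule finite_sets)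
  have "V \<in> subspaces V" using V by (simp add: subspaces_iff)
  then have ne: "?S \<noteq> {}" by blast
  have "Min ?S \<in> ?S" using fin ne by (rule Min_in)
  then obtain X where X: "X \<in> subspaces V" "Min ?S = ?f X" by blast
  then have "\<rho> V + vec.dim X = \<rho>1 (proj1 E1 E2 ` X) + \<rho>2 (proj2 E1 E2 ` X) + vec.dim V" using eq by linarith
  then show "\<exists>X \<in> subspaces V. \<rho> V + vec.dim X = \<rho>1 (proj1 E1 E2 ` X) + \<rho>2 (proj2 E1 E2 ` X) + vec.dim V"
    using X by blast
qed

lemma dsum_lower:
  assumes qm: "qmatroid E \<rho>" and D: "internal_dsum E E1 E2" and V: "V \<in> subspaces E" and X: "X \<in> subspaces V"
  shows "\<rho> V + vec.dim X \<le> \<rho> (proj1 E1 E2 ` X) + \<rho> (proj2 E1 E2 ` X) + vec.dim V"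
proof -
  have XE: "X \<in> subspaces E" using subs_trans X V by blast
  have XV: "X \<subseteq> V" using X by (simp add: subspaces_iff)
  have P: "proj1 E1 E2 ` X \<in> subspaces E" "proj2 E1 E2 ` X \<in> subspaces E" using proj_img_subsE[OF D XE] by auto
  have SE: "ssum (proj1 E1 E2 ` X) (proj2 E1 E2 ` X) \<in> subspaces E" using ssum_sub[OF P qm_E[OF qm]] .
  have "X \<subseteq> ssum (proj1 E1 E2 ` X) (proj2 E1 E2 ` X)" using proj_cover[OF D] XE by (simp add: subspaces_iff)
  then have "\<rho> X \<le> \<rho> (ssum (proj1 E1 E2 ` X) (proj2 E1 E2 ` X))" using qm_mono[OF qm XE SE] by blast
  also have "\<dots> \<le> \<rho> (proj1 E1 E2 ` X) + \<rho> (proj2 E1 E2 ` X)" using qm_submod_le[OF qm P] .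
  finally have "\<rho> X \<le> \<rho> (proj1 E1 E2 ` X) + \<rho> (proj2 E1 E2 ` X)" .
  moreover have "\<rho> V + vec.dim X \<le> \<rho> X + vec.dim V" using qm_R2[OF qm XE V XV] .
  ultimately show ?thesis by linarith
qed

lemma dsum_crit:
  assumes qm: "qmatroid E \<rho>" and D: "internal_dsum E E1 E2"
    and cr: "\<And>V. V \<in> subspaces E \<Longrightarrow> \<exists>X \<in> subspaces V.
               \<rho> (proj1 E1 E2 ` X) + \<rho> (proj2 E1 E2 ` X) + vec.dim V \<le> \<rho> V + vec.dim X"
  shows "is_dsum E \<rho> E1 \<rho> E2 \<rho>"
  unfolding is_dsum_def
proof (intro conjI ballI D)
  show "qmatroid E1 \<rho>" using qm_restrict[OF qm ids_E1s[OF D]] .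
  show "qmatroid E2 \<rho>" using qm_restrict[OF qm ids_E2s[OF D]] .
  fix V assume V: "V \<in> subspaces E"
  let ?f = "\<lambda>X. int (\<rho> (proj1 E1 E2 ` X)) + int (\<rho> (proj2 E1 E2 ` X)) - int (vec.dim X)"
  let ?S = "{?f X | X. X \<in> subspaces V}"
  have fin: "finite ?S" by (rule finite_image_set) (rule finite_sets)
  obtain X where X: "X \<in> subspaces V" "\<rho> (proj1 E1 E2 ` X) + \<rho> (proj2 E1 E2 ` X) + vec.dim V \<le> \<rho> V + vec.dim X"
    using cr[OF V] by blast
  have "Min ?S = int (\<rho> V) - int (vec.dim V)"
  proof (rule Min_eqI[OF fin])
    fix y assume "y \<in> ?S"
    then obtain Y where Y: "Y \<in> subspaces V" "y = ?f Y" by blast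
    then show "int (\<rho> V) - int (vec.dim V) \<le> y" using dsum_lower[OF qm D V Y(1)] by linarith
  next
    have "?f X = int (\<rho> V) - int (vec.dim V)" using dsum_lower[OF qm D V X(1)] X(2) by linarith
    then show "int (\<rho> V) - int (vec.dim V) \<in> ?S" using X(1) by (metis (mono_tags, lifting) mem_Collect_eq)
  qed
  then show "int (\<rho> V) = dsum_rank E1 \<rho> E2 \<rho> V" unfolding dsum_rank_def by linarith
qed

lemma ds_D: "is_dsum E \<rho> E1 \<rho>1 E2 \<rho>2 \<Longrightarrow> internal_dsum E E1 E2" by (simp add: is_dsum_def)
lemma ds_qm1: "is_dsum E \<rho> E1 \<rho>1 E2 \<rho>2 \<Longrightarrow> qmatroid E1 \<rho>1" by (simp add: is_dsum_def)
lemma ds_qm2: "is_dsum E \<rho> E1 \<rho>1 E2 \<rho>2 \<Longrightarrow> qmatroid E2 \<rho>2" by (simp add: is_dsum_def)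

lemma dsum_rho1:
  assumes ds: "is_dsum E \<rho> E1 \<rho>1 E2 \<rho>2" and V: "V \<in> subspaces E1"
  shows "\<rho> V = \<rho>1 V"
proof -
  have D: "internal_dsum E E1 E2" using ds_D[OF ds] .
  have VE: "V \<in> subspaces E" using subs_trans V ids_E1s[OF D] by blast
  have z: "\<rho>2 {0} = 0" using qm_zero[OF ds_qm2[OF ds]] .
  have VV: "V \<in> subspaces V" using V by (simp add: subspaces_iff)
  have "\<rho> V \<le> \<rho>1 V" using dsum_facts(1)[OF ds VE VV] proj_img_E1[OF D V] z by simp
  moreover obtain X where X: "X \<in> subspaces V"
    "\<rho> V + vec.dim X = \<rho>1 (proj1 E1 E2 ` X) + \<rho>2 (proj2 E1 E2 ` X) + vec.dim V"
    using dsum_facts(2)[OF ds VE] by blast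
  have XE1: "X \<in> subspaces E1" using subs_trans X(1) V by blast
  have "\<rho> V + vec.dim X = \<rho>1 X + vec.dim V" using X(2) proj_img_E1[OF D XE1] z by simp
  moreover have "\<rho>1 V + vec.dim X \<le> \<rho>1 X + vec.dim V"
    using qm_R2[OF ds_qm1[OF ds] XE1 V] X(1) by (simp add: subspaces_iff)
  ultimately show ?thesis by linarith
qed

lemma dsum_rho2:
  assumes ds: "is_dsum E \<rho> E1 \<rho>1 E2 \<rho>2" and V: "V \<in> subspaces E2"
  shows "\<rho> V = \<rho>2 V"
proof -
  have D: "internal_dsum E E1 E2" using ds_D[OF ds] .
  have VE: "V \<in> subspaces E" using subs_trans V ids_E2s[OF D] by blast
  have z: "\<rho>1 {0} = 0" using qm_zero[OF ds_qm1[OF ds]] .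
  have VV: "V \<in> subspaces V" using V by (simp add: subspaces_iff)
  have "\<rho> V \<le> \<rho>2 V" using dsum_facts(1)[OF ds VE VV] proj_img_E2[OF D V] z by simp
  moreover obtain X where X: "X \<in> subspaces V"
    "\<rho> V + vec.dim X = \<rho>1 (proj1 E1 E2 ` X) + \<rho>2 (proj2 E1 E2 ` X) + vec.dim V"
    using dsum_facts(2)[OF ds VE] by blast
  have XE2: "X \<in> subspaces E2" using subs_trans X(1) V by blast
  have "\<rho> V + vec.dim X = \<rho>2 X + vec.dim V" using X(2) proj_img_E2[OF D XE2] z by simp
  moreover have "\<rho>2 V + vec.dim X \<le> \<rho>2 X + vec.dim V"
    using qm_R2[OF ds_qm2[OF ds] XE2 V] X(1) by (simp add: subspaces_iff)
  ultimately show ?thesis by linarith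
qed

lemma dsum_exact:
  assumes ds: "is_dsum E \<rho> E1 \<rho>1 E2 \<rho>2" and V: "V \<in> subspaces E"
  shows "\<exists>X \<in> subspaces V. \<rho> V + vec.dim X = \<rho> (proj1 E1 E2 ` X) + \<rho> (proj2 E1 E2 ` X) + vec.dim V"
proof -
  have D: "internal_dsum E E1 E2" using ds_D[OF ds] .
  obtain X where X: "X \<in> subspaces V"
    "\<rho> V + vec.dim X = \<rho>1 (proj1 E1 E2 ` X) + \<rho>2 (proj2 E1 E2 ` X) + vec.dim V"
    using dsum_facts(2)[OF ds V] by blast
  have XE: "X \<in> subspaces E" using subs_trans X(1) V by blast
  have "\<rho> (proj1 E1 E2 ` X) = \<rho>1 (proj1 E1 E2 ` X)" using dsum_rho1[OF ds proj1_img_sub[OF D XE]] .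
  moreover have "\<rho> (proj2 E1 E2 ` X) = \<rho>2 (proj2 E1 E2 ` X)" using dsum_rho2[OF ds proj2_img_sub[OF D XE]] .
  ultimately have "\<rho> V + vec.dim X = \<rho> (proj1 E1 E2 ` X) + \<rho> (proj2 E1 E2 ` X) + vec.dim V"
    using X(2) by simp
  then show ?thesis using X(1) by blast
qed

lemma dsum_F2:
  assumes qm: "qmatroid E \<rho>" and ds: "is_dsum E \<rho> E1 \<rho>1 E2 \<rho>2" and V: "V \<in> subspaces E"
  shows "\<rho> (proj1 E1 E2 ` V) + \<rho> (proj2 E1 E2 ` V) + vec.dim V
          \<le> \<rho> V + vec.dim (proj1 E1 E2 ` V) + vec.dim (proj2 E1 E2 ` V)"
proof -
  have D: "internal_dsum E E1 E2" using ds_D[OF ds] .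
  obtain X where X: "X \<in> subspaces V"
    "\<rho> V + vec.dim X = \<rho> (proj1 E1 E2 ` X) + \<rho> (proj2 E1 E2 ` X) + vec.dim V"
    using dsum_exact[OF ds V] by blast
  have XE: "X \<in> subspaces E" using subs_trans X(1) V by blast
  have XV: "X \<subseteq> V" using X(1) by (simp add: subspaces_iff)
  have PX: "proj1 E1 E2 ` X \<in> subspaces E" "proj2 E1 E2 ` X \<in> subspaces E" using proj_img_subsE[OF D XE] by auto
  have PV: "proj1 E1 E2 ` V \<in> subspaces E" "proj2 E1 E2 ` V \<in> subspaces E" using proj_img_subsE[OF D V] by auto
  have "\<rho> (proj1 E1 E2 ` V) + vec.dim (proj1 E1 E2 ` X) \<le> \<rho> (proj1 E1 E2 ` X) + vec.dim (proj1 E1 E2 ` V)"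
    using qm_R2[OF qm PX(1) PV(1)] XV by blast
  moreover have "\<rho> (proj2 E1 E2 ` V) + vec.dim (proj2 E1 E2 ` X) \<le> \<rho> (proj2 E1 E2 ` X) + vec.dim (proj2 E1 E2 ` V)"
    using qm_R2[OF qm PX(2) PV(2)] XV by blast
  moreover have "vec.dim X \<le> vec.dim (proj1 E1 E2 ` X) + vec.dim (proj2 E1 E2 ` X)" using dim_proj[OF D XE] .
  ultimately show ?thesis using X(2) by linarith
qed

lemma proj_img_ssum:
  assumes D: "internal_dsum E E1 E2" and Y: "Y1 \<in> subspaces E1" "Y2 \<in> subspaces E2"
  shows "proj1 E1 E2 ` ssum Y1 Y2 = Y1" "proj2 E1 E2 ` ssum Y1 Y2 = Y2"
proof -
  have Y': "Y1 \<subseteq> E1" "Y2 \<subseteq> E2" "vec.subspace Y1" "vec.subspace Y2" using Y by (auto simp: subspaces_iff)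
  have s1: "Y1 \<subseteq> ssum Y1 Y2" using ssum_ub1[OF Y'(4)] .
  have s2: "Y2 \<subseteq> ssum Y1 Y2" using ssum_ub2[OF Y'(3)] .
  show "proj1 E1 E2 ` ssum Y1 Y2 = Y1"
  proof
    show "proj1 E1 E2 ` ssum Y1 Y2 \<subseteq> Y1" using proj_img_parts[OF D Y'(1,2)] by blast
    show "Y1 \<subseteq> proj1 E1 E2 ` ssum Y1 Y2"
    proof
      fix y assume y: "y \<in> Y1"
      then have "proj1 E1 E2 y = y" using proj_E1(1)[OF D] Y'(1) by blast
      then show "y \<in> proj1 E1 E2 ` ssum Y1 Y2" using s1 y by (metis image_eqI subsetD)
    qed
  qed
  show "proj2 E1 E2 ` ssum Y1 Y2 = Y2"
  proof
    show "proj2 E1 E2 ` ssum Y1 Y2 \<subseteq> Y2" using proj_img_parts[OF D Y'(1,2)] by blast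
    show "Y2 \<subseteq> proj2 E1 E2 ` ssum Y1 Y2"
    proof
      fix y assume y: "y \<in> Y2"
      then have "proj2 E1 E2 y = y" using proj_E2(2)[OF D] Y'(2) by blast
      then show "y \<in> proj2 E1 E2 ` ssum Y1 Y2" using s2 y by (metis image_eqI subsetD)
    qed
  qed
qed

lemma parts_subsE:
  assumes D: "internal_dsum E E1 E2" and Y: "Y1 \<in> subspaces E1" "Y2 \<in> subspaces E2"
  shows "Y1 \<in> subspaces E" "Y2 \<in> subspaces E" "ssum Y1 Y2 \<in> subspaces E"
proof -
  show 1: "Y1 \<in> subspaces E" using subs_trans Y(1) ids_E1s[OF D] by blast
  show 2: "Y2 \<in> subspaces E" using subs_trans Y(2) ids_E2s[OF D] by blast
  show "ssum Y1 Y2 \<in> subspaces E" using ssum_sub[OF 1 2 ids_E[OF D]] .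
qed

lemma dsum_F1:
  assumes qm: "qmatroid E \<rho>" and ds: "is_dsum E \<rho> E1 \<rho>1 E2 \<rho>2"
    and Y: "Y1 \<in> subspaces E1" "Y2 \<in> subspaces E2"
  shows "\<rho> (ssum Y1 Y2) = \<rho> Y1 + \<rho> Y2"
proof -
  have D: "internal_dsum E E1 E2" using ds_D[OF ds] .
  have S: "Y1 \<in> subspaces E" "Y2 \<in> subspaces E" "ssum Y1 Y2 \<in> subspaces E" using parts_subsE[OF D Y] by auto
  have d: "vec.dim (ssum Y1 Y2) = vec.dim Y1 + vec.dim Y2"
    using dim_parts[OF D] Y by (auto simp: subspaces_iff)
  have "\<rho> Y1 + \<rho> Y2 \<le> \<rho> (ssum Y1 Y2)"
    using dsum_F2[OF qm ds S(3)] proj_img_ssum[OF D Y] d by simp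
  moreover have "\<rho> (ssum Y1 Y2) \<le> \<rho> Y1 + \<rho> Y2" using qm_submod_le[OF qm S(1,2)] .
  ultimately show ?thesis by linarith
qed


lemma cf_subs: "Z \<in> cyclic_flats E \<rho> \<Longrightarrow> Z \<in> subspaces E"
  by (simp add: cyclic_flats_def flat_def)

lemma ranks_sum_ge:
  assumes qm: "qmatroid E \<rho>" and Z: "Z1 \<in> subspaces E" "Z2 \<in> subspaces E"
    and e: "ssum Z1 Z2 = E" and r: "\<rho> Z1 + \<rho> Z2 = \<rho> E"
    and Y: "Y1 \<in> subspaces Z1" "Y2 \<in> subspaces Z2"
  shows "\<rho> Y1 + \<rho> Y2 \<le> \<rho> (ssum Y1 Y2)"
proof -
  have sE: "vec.subspace E" using qm_E[OF qm] .
  have YE: "Y1 \<in> subspaces E" "Y2 \<in> subspaces E" using subs_trans Y Z by blast+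
  have sY: "vec.subspace Y1" "vec.subspace Y2" "Y1 \<subseteq> Z1" "Y2 \<subseteq> Z2" using Y by (auto simp: subspaces_iff)
  have sZ: "vec.subspace Z1" "vec.subspace Z2" using Z by (auto simp: subspaces_iff)
  define A where "A = ssum Y1 Z2"
  have AE: "A \<in> subspaces E" unfolding A_def using ssum_sub[OF YE(1) Z(2) sE] .
  have sA: "vec.subspace A" using AE by (simp add: subspaces_iff)
  have AZ1E: "ssum A Z1 \<in> subspaces E" using ssum_sub[OF AE Z(1) sE] .
  have "E \<subseteq> ssum A Z1"
  proof -
    have "Z2 \<subseteq> A" unfolding A_def using ssum_ub2[OF sY(1)] .
    also have "A \<subseteq> ssum A Z1" using ssum_ub1[OF sZ(1)] .
    finally have "Z2 \<subseteq> ssum A Z1" .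
    moreover have "Z1 \<subseteq> ssum A Z1" using ssum_ub2[OF sA] .
    ultimately show ?thesis using e ssum_least[of "ssum A Z1" Z1 Z2] subspace_ssum[OF sA sZ(1)] by blast
  qed
  then have 1: "\<rho> E \<le> \<rho> (ssum A Z1)" using qm_mono[OF qm _ AZ1E] zero_sub sE by (simp add: subspaces_iff)
  have "Y1 \<subseteq> A \<inter> Z1" unfolding A_def using ssum_ub1[OF sZ(2)] sY(3) by blast
  then have 2: "\<rho> Y1 \<le> \<rho> (A \<inter> Z1)" using qm_mono[OF qm YE(1) inter_sub[OF AE Z(1)]] by blast
  have 3: "\<rho> (ssum A Z1) + \<rho> (A \<inter> Z1) \<le> \<rho> A + \<rho> Z1" using qm_submod[OF qm AE Z(1)] .
  have a: "\<rho> Y1 + \<rho> Z2 \<le> \<rho> A" using 1 2 3 r by linarith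
  define B where "B = ssum Y1 Y2"
  have BE: "B \<in> subspaces E" unfolding B_def using ssum_sub[OF YE sE] .
  have sB: "vec.subspace B" using BE by (simp add: subspaces_iff)
  have BZ2E: "ssum B Z2 \<in> subspaces E" using ssum_sub[OF BE Z(2) sE] .
  have "A \<subseteq> ssum B Z2" unfolding A_def B_def using ssum_mono[OF ssum_ub1[OF sY(2)] order_refl] .
  then have 4: "\<rho> A \<le> \<rho> (ssum B Z2)" using qm_mono[OF qm AE BZ2E] by blast
  have "Y2 \<subseteq> B \<inter> Z2" unfolding B_def using ssum_ub2[OF sY(1)] sY(4) by blast
  then have 5: "\<rho> Y2 \<le> \<rho> (B \<inter> Z2)" using qm_mono[OF qm YE(2) inter_sub[OF BE Z(2)]] by blast
  have 6: "\<rho> (ssum B Z2) + \<rho> (B \<inter> Z2) \<le> \<rho> B + \<rho> Z2" using qm_submod[OF qm BE Z(2)] .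
  show ?thesis using a 4 5 6 unfolding B_def by linarith
qed

lemma cf_decomp_dsum:
  assumes qm: "qmatroid E \<rho>"
    and Z: "Z1 \<in> cyclic_flats E \<rho>" "Z2 \<in> cyclic_flats E \<rho>"
    and e: "ssum Z1 Z2 = E" and i: "Z1 \<inter> Z2 = {0}" and r: "\<rho> Z1 + \<rho> Z2 = \<rho> E"
    and cf: "{ssum Y1 Y2 | Y1 Y2. Y1 \<in> {Z \<in> cyclic_flats E \<rho>. Z \<subseteq> Z1} \<and>
                                Y2 \<in> {Z \<in> cyclic_flats E \<rho>. Z \<subseteq> Z2}} = cyclic_flats E \<rho>"
  shows "is_dsum E \<rho> Z1 \<rho> Z2 \<rho>"
proof -
  have sE: "vec.subspace E" using qm_E[OF qm] .
  have ZE: "Z1 \<in> subspaces E" "Z2 \<in> subspaces E" using cf_subs Z by blast+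
  have D: "internal_dsum E Z1 Z2" unfolding internal_dsum_def using ZE e i by (simp add: subspaces_iff)
  show ?thesis
  proof (rule dsum_crit[OF qm D])
    fix V assume V: "V \<in> subspaces E"
    obtain Z where Zc: "Z \<in> cyclic_flats E \<rho>" and Zr: "\<rho> Z + vec.dim (ssum V Z) \<le> \<rho> V + vec.dim Z"
      using rank_cf[OF qm V] by blast
    obtain Y1 Y2 where Y: "Z = ssum Y1 Y2" "Y1 \<in> cyclic_flats E \<rho>" "Y1 \<subseteq> Z1" "Y2 \<in> cyclic_flats E \<rho>" "Y2 \<subseteq> Z2"
      using Zc cf by blast
    have YE: "Y1 \<in> subspaces E" "Y2 \<in> subspaces E" using cf_subs Y by blast+
    have YZ: "Y1 \<in> subspaces Z1" "Y2 \<in> subspaces Z2" using YE Y by (auto simp: subspaces_iff)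
    have ZsE: "Z \<in> subspaces E" using cf_subs Zc .
    have sV: "vec.subspace V" and sZ: "vec.subspace Z" using V ZsE by (auto simp: subspaces_iff)
    define X where "X = V \<inter> Z"
    have XV: "X \<in> subspaces V" unfolding X_def using sV sZ by (auto simp: subspaces_iff vec.subspace_inter)
    have XE: "X \<in> subspaces E" using subs_trans XV V by blast
    have XZ: "X \<subseteq> ssum Y1 Y2" unfolding X_def using Y(1) by blast
    have P: "proj1 Z1 Z2 ` X \<subseteq> Y1" "proj2 Z1 Z2 ` X \<subseteq> Y2" using proj_img_parts[OF D Y(3) Y(5) XZ] by auto
    have PE: "proj1 Z1 Z2 ` X \<in> subspaces E" "proj2 Z1 Z2 ` X \<in> subspaces E" using proj_img_subsE[OF D XE] by auto
    have "\<rho> (proj1 Z1 Z2 ` X) \<le> \<rho> Y1" using qm_mono[OF qm PE(1) YE(1) P(1)] .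
    moreover have "\<rho> (proj2 Z1 Z2 ` X) \<le> \<rho> Y2" using qm_mono[OF qm PE(2) YE(2) P(2)] .
    moreover have "\<rho> Y1 + \<rho> Y2 \<le> \<rho> Z" using ranks_sum_ge[OF qm ZE e r YZ] Y(1) by simp
    moreover have "vec.dim (ssum V Z) + vec.dim X = vec.dim V + vec.dim Z" unfolding X_def using dim_ssum[OF sV sZ] .
    ultimately have "\<rho> (proj1 Z1 Z2 ` X) + \<rho> (proj2 Z1 Z2 ` X) + vec.dim V \<le> \<rho> V + vec.dim X"
      using Zr by linarith
    then show "\<exists>X\<in>subspaces V. \<rho> (proj1 Z1 Z2 ` X) + \<rho> (proj2 Z1 Z2 ` X) + vec.dim V \<le> \<rho> V + vec.dim X"
      using XV by blast
  qed
qed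


lemma loop_reducible:
  assumes qm: "qmatroid E \<rho>" and d2: "vec.dim E \<ge> 2" and u: "u \<in> E" "u \<noteq> 0"
    and r0: "\<rho> (vec.span {u}) = 0"
  shows "reducible E \<rho>"
proof -
  have sE: "vec.subspace E" using qm_E[OF qm] .
  define L where "L = vec.span {u}"
  have LE: "L \<in> subspaces E" unfolding L_def using span1_subs[OF sE u(1)] .
  have sL: "vec.subspace L" and LsE: "L \<subseteq> E" using LE by (auto simp: subspaces_iff)
  have dL: "vec.dim L = 1" unfolding L_def using dim_span1_nz[OF u(2)] .
  obtain C where C: "vec.subspace C" "C \<subseteq> E" "ssum L C = E" "vec.dim C + vec.dim L \<le> vec.dim E"
    using complement_exists[OF sL sE LsE] by blast
  have "vec.dim E + vec.dim (L \<inter> C) = vec.dim L + vec.dim C" using dim_ssum[OF sL C(1)] C(3) by simp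
  then have "vec.dim (L \<inter> C) = 0" using C(4) by linarith
  then have LC: "L \<inter> C = {0}" using dim_zero vec.subspace_inter sL C(1) by blast
  have "vec.dim E \<le> vec.dim L + vec.dim C" using dim_ssum_le[OF sL C(1)] C(3) by simp
  then have dC: "vec.dim C \<ge> 1" using dL d2 by linarith
  have C0: "C \<noteq> {0}" using dC dim_zero_set by (metis not_one_le_zero)
  have L0: "L \<noteq> {0}" unfolding L_def using u(2) vec.span_base[of u "{u}"] by auto
  have D: "internal_dsum E L C" unfolding internal_dsum_def using sL C LC by blast
  have rL: "\<rho> L = 0" using r0 L_def by simp
  have "is_dsum E \<rho> L \<rho> C \<rho>"
  proof (rule dsum_crit[OF qm D])
    fix V assume V: "V \<in> subspaces E"
    have sV: "vec.subspace V" and VE: "V \<subseteq> E" using V by (auto simp: subspaces_iff)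
    have PE: "proj1 L C ` V \<in> subspaces E" "proj2 L C ` V \<in> subspaces E" using proj_img_subsE[OF D V] by auto
    have "proj1 L C ` V \<subseteq> L" using proj_decomp(1)[OF D] VE by blast
    then have 1: "\<rho> (proj1 L C ` V) = 0" using qm_mono[OF qm PE(1) LE] rL by simp
    have VLE: "ssum V L \<in> subspaces E" using ssum_sub[OF V LE sE] .
    have "proj2 L C ` V \<subseteq> ssum V L"
    proof
      fix y assume "y \<in> proj2 L C ` V"
      then obtain v where v: "v \<in> V" "y = proj2 L C v" by blast
      have "proj1 L C v \<in> L" "proj1 L C v + proj2 L C v = v" using proj_decomp[OF D] v VE by blast+
      then have "- proj1 L C v \<in> L" "y = v + (- proj1 L C v)" using vec.subspace_neg[OF sL] v
        by (auto simp: algebra_simps)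
      then show "y \<in> ssum V L" unfolding ssum_def using v(1) by blast
    qed
    then have "\<rho> (proj2 L C ` V) \<le> \<rho> (ssum V L)" using qm_mono[OF qm PE(2) VLE] by blast
    also have "\<dots> \<le> \<rho> V + \<rho> L" using qm_submod_le[OF qm V LE] .
    finally have 2: "\<rho> (proj2 L C ` V) \<le> \<rho> V" using rL by simp
    have VV: "V \<in> subspaces V" using sV by (simp add: subspaces_iff)
    show "\<exists>X\<in>subspaces V. \<rho> (proj1 L C ` X) + \<rho> (proj2 L C ` X) + vec.dim V \<le> \<rho> V + vec.dim X"
      using 1 2 VV by (intro bexI[of _ V]) auto
  qed
  then show ?thesis unfolding reducible_def using L0 C0 by blast
qed

lemma coloop_reducible:
  assumes qm: "qmatroid E \<rho>" and d2: "vec.dim E \<ge> 2" and x: "x \<in> E"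
    and W: "W \<in> subspaces E" and e: "ssum W (vec.span {x}) = E" and r: "\<rho> W \<noteq> \<rho> E"
  shows "reducible E \<rho>"
proof -
  have sE: "vec.subspace E" using qm_E[OF qm] .
  have sW: "vec.subspace W" and WsE: "W \<subseteq> E" using W by (auto simp: subspaces_iff)
  define L where "L = vec.span {x}"
  have LE: "L \<in> subspaces E" unfolding L_def using span1_subs[OF sE x] .
  have sL: "vec.subspace L" using LE by (simp add: subspaces_iff)
  have xW: "x \<notin> W"
  proof
    assume "x \<in> W"
    then have "ssum W (vec.span {x}) \<subseteq> W" using ssum_single_le[OF sW order_refl] by blast
    then have "W = E" using e WsE by blast
    then show False using r by simp
  qed
  have dE: "vec.dim E = vec.dim W + 1" using dim_ssum_single_notin[OF sW xW] e by simp
  have "vec.dim E + vec.dim (W \<inter> L) = vec.dim W + vec.dim L" using dim_ssum[OF sW sL] e unfolding L_def by simp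
  then have "vec.dim (W \<inter> L) = 0" using dE dim_span1[of x] unfolding L_def by linarith
  then have WL: "W \<inter> L = {0}" using dim_zero vec.subspace_inter sW sL by blast
  have W0: "W \<noteq> {0}" using dE d2 dim_zero_set by (metis One_nat_def add_le_cancel_right nat_1_add_1 not_one_le_zero)
  have x0: "x \<noteq> 0" using xW vec.subspace_0[OF sW] by blast
  have L0: "L \<noteq> {0}" unfolding L_def using x0 vec.span_base[of x "{x}"] by auto
  have D: "internal_dsum E W L" unfolding internal_dsum_def using sW sL WL e L_def by blast
  have EE: "E \<in> subspaces E" using sE by (simp add: subspaces_iff)
  have rE: "\<rho> E = \<rho> W + 1"
    using qm_R2[OF qm W EE WsE] qm_mono[OF qm W EE WsE] dE r by linarith
  have z: "\<rho> {0} = 0" using qm_zero[OF qm] .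
  have "is_dsum E \<rho> W \<rho> L \<rho>"
  proof (rule dsum_crit[OF qm D])
    fix V assume V: "V \<in> subspaces E"
    have sV: "vec.subspace V" and VE: "V \<subseteq> E" using V by (auto simp: subspaces_iff)
    define X where "X = V \<inter> W"
    have XV: "X \<in> subspaces V" unfolding X_def using sV sW by (auto simp: subspaces_iff vec.subspace_inter)
    have XW: "X \<in> subspaces W" unfolding X_def using sV sW by (auto simp: subspaces_iff vec.subspace_inter)
    have p: "proj1 W L ` X = X" "proj2 W L ` X = {0}" using proj_img_E1[OF D XW] by auto
    have "\<rho> X + vec.dim V \<le> \<rho> V + vec.dim X"
    proof (cases "V \<subseteq> W")
      case True
      then show ?thesis unfolding X_def by (simp add: Int_absorb2)
    next
      case False
      have sVW: "vec.subspace (ssum V W)" using subspace_ssum[OF sV sW] .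
      have VWE: "ssum V W \<subseteq> E" using ssum_least[OF sE VE WsE] .
      have "W \<subseteq> ssum V W" using ssum_ub2[OF sV] .
      moreover have "W \<noteq> ssum V W" using False ssum_ub1[OF sW, of V] by blast
      ultimately have "vec.dim W < vec.dim (ssum V W)" using dim_lt sW sVW by blast
      then have "vec.dim E \<le> vec.dim (ssum V W)" using dE by linarith
      then have VWe: "ssum V W = E" using dim_eq_sub[OF sVW sE VWE] by blast
      have "\<rho> E + \<rho> (V \<inter> W) \<le> \<rho> V + \<rho> W" using qm_submod[OF qm V W] VWe by simp
      moreover have "vec.dim E + vec.dim (V \<inter> W) = vec.dim V + vec.dim W" using dim_ssum[OF sV sW] VWe by simp
      ultimately show ?thesis unfolding X_def using VWe rE dE by linarith
    qed
    then show "\<exists>X\<in>subspaces V. \<rho> (proj1 W L ` X) + \<rho> (proj2 W L ` X) + vec.dim V \<le> \<rho> V + vec.dim X"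
      using XV p z by (intro bexI[of _ X]) auto
  qed
  then show ?thesis unfolding reducible_def using W0 L0 by blast
qed

lemma notfull_reducible:
  assumes qm: "qmatroid E \<rho>" and d2: "vec.dim E \<ge> 2" and nf: "\<not> full E \<rho>"
  shows "reducible E \<rho>"
proof (cases "qclosure E \<rho> {0} = {0}")
  case False
  have z: "\<rho> {0} = 0" using qm_zero[OF qm] .
  have "\<exists>u\<in>E. u \<noteq> 0 \<and> \<rho> (ssum {0} (vec.span {u})) = \<rho> {0}"
  proof (rule ccontr)
    assume "\<not> ?thesis"
    then have "{x \<in> E. \<rho> (ssum {0} (vec.span {x})) = \<rho> {0}} \<subseteq> {0}" by blast
    then have "qclosure E \<rho> {0} \<subseteq> vec.span {0}" unfolding qclosure_def by (rule vec.span_mono)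
    moreover have "0 \<in> qclosure E \<rho> {0}" unfolding qclosure_def by (rule vec.span_zero)
    ultimately show False using False vec.span_zero by (auto simp: vec.span_singleton)
  qed
  then obtain u where u: "u \<in> E" "u \<noteq> 0" "\<rho> (ssum {0} (vec.span {u})) = \<rho> {0}" by blast
  have "ssum {0} (vec.span {u}) = vec.span {u}" by (rule ssum_0_left[OF vec.subspace_span])
  then have "\<rho> (vec.span {u}) = 0" using u(3) z by simp
  then show ?thesis using loop_reducible[OF qm d2 u(1,2)] by blast
next
  case True
  then have "cyc \<rho> E \<noteq> E" using nf by (simp add: full_def)
  then obtain x where x: "x \<in> E" "x \<notin> cyc \<rho> E" unfolding cyc_def by blast
  then obtain W where "W \<in> subspaces E" "ssum W (vec.span {x}) = E" "\<rho> W \<noteq> \<rho> E"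
    unfolding cyc_def by blast
  then show ?thesis using coloop_reducible[OF qm d2 x(1)] by blast
qed


lemma cf_subs': "Z \<in> cyclic_flats E \<rho> \<Longrightarrow> Z \<in> subspaces E"
  by (simp add: cyclic_flats_def flat_def)

lemma full_span1:
  assumes qm: "qmatroid E \<rho>" and fu: "full E \<rho>" and u: "u \<in> E" "u \<noteq> 0"
  shows "\<rho> (vec.span {u}) = 1"
proof -
  have z: "\<rho> {0} = 0" using qm_zero[OF qm] .
  have e: "ssum {0} (vec.span {u}) = vec.span {u}" by (rule ssum_0_left[OF vec.subspace_span])
  have "\<rho> (vec.span {u}) \<noteq> 0"
  proof
    assume "\<rho> (vec.span {u}) = 0"
    then have "u \<in> {x \<in> E. \<rho> (ssum {0} (vec.span {x})) = \<rho> {0}}" using u e z by simp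
    then have "u \<in> qclosure E \<rho> {0}" unfolding qclosure_def by (rule vec.span_base)
    then show False using fu u(2) by (simp add: full_def)
  qed
  then show ?thesis using qm_span1[OF qm u(1)] by linarith
qed

lemma full_E_cf:
  assumes qm: "qmatroid E \<rho>" and fu: "full E \<rho>"
  shows "E \<in> cyclic_flats E \<rho>"
  using qm_E[OF qm] fu unfolding cyclic_flats_def flat_def cyclic_def full_def by (simp add: subspaces_iff)

lemma ds_swap:
  assumes ds: "is_dsum E \<rho> E1 \<rho>1 E2 \<rho>2"
  shows "is_dsum E \<rho> E2 \<rho>2 E1 \<rho>1"
proof -
  have p: "proj1 E2 E1 = proj2 E1 E2" "proj2 E2 E1 = proj1 E1 E2"
    unfolding proj1_def proj2_def by (rule ext, simp)+
  have D: "internal_dsum E E2 E1" using ds_D[OF ds] unfolding internal_dsum_def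
    by (auto simp: ssum_comm Int_commute)
  have r: "\<And>V. dsum_rank E2 \<rho>2 E1 \<rho>1 V = dsum_rank E1 \<rho>1 E2 \<rho>2 V"
    unfolding dsum_rank_def p by (simp add: add.commute)
  show ?thesis using ds D unfolding is_dsum_def r by blast
qed

lemma cf_split:
  assumes qm: "qmatroid E \<rho>" and ds: "is_dsum E \<rho> E1 \<rho>1 E2 \<rho>2" and Zc: "Z \<in> cyclic_flats E \<rho>"
  shows "Z = ssum (Z \<inter> E1) (Z \<inter> E2)" "Z \<inter> E1 \<in> subspaces E1" "Z \<inter> E2 \<in> subspaces E2"
proof -
  have D: "internal_dsum E E1 E2" using ds_D[OF ds] .
  have sE: "vec.subspace E" using qm_E[OF qm] .
  have ZE: "Z \<in> subspaces E" using cf_subs' Zc .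
  have sZ: "vec.subspace Z" and ZsE: "Z \<subseteq> E" using ZE by (auto simp: subspaces_iff)
  have fl: "flat E \<rho> Z" and cy: "cyclic \<rho> Z" using Zc by (auto simp: cyclic_flats_def)
  obtain X where X: "X \<in> subspaces Z"
    "\<rho> Z + vec.dim X = \<rho> (proj1 E1 E2 ` X) + \<rho> (proj2 E1 E2 ` X) + vec.dim Z"
    using dsum_exact[OF ds ZE] by blast
  have XE: "X \<in> subspaces E" using subs_trans X(1) ZE by blast
  have XZ: "X \<subseteq> Z" and sX: "vec.subspace X" using X(1) by (auto simp: subspaces_iff)
  have XX: "X \<in> subspaces X" using sX by (simp add: subspaces_iff)
  have a: "\<rho> X + vec.dim X \<le> \<rho> (proj1 E1 E2 ` X) + \<rho> (proj2 E1 E2 ` X) + vec.dim X"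
    using dsum_lower[OF qm D XE XX] .
  have b: "\<rho> Z + vec.dim X \<le> \<rho> X + vec.dim Z" using qm_R2[OF qm XE ZE XZ] .
  have XeqZ: "X = Z"
  proof (rule ccontr)
    assume "X \<noteq> Z"
    then have "\<rho> Z + vec.dim X + 1 \<le> \<rho> X + vec.dim Z" using cyclic_strict[OF qm ZE cy sX XZ] by blast
    then show False using a X(2) by linarith
  qed
  define P1 where "P1 = proj1 E1 E2 ` Z"
  define P2 where "P2 = proj2 E1 E2 ` Z"
  have P: "P1 \<in> subspaces E1" "P2 \<in> subspaces E2" unfolding P1_def P2_def
    using proj1_img_sub[OF D ZE] proj2_img_sub[OF D ZE] by auto
  have PE: "P1 \<in> subspaces E" "P2 \<in> subspaces E" "ssum P1 P2 \<in> subspaces E" using parts_subsE[OF D P] by auto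
  have rZ: "\<rho> Z = \<rho> P1 + \<rho> P2" using X(2) XeqZ unfolding P1_def P2_def by simp
  have rQ: "\<rho> (ssum P1 P2) = \<rho> Z" using dsum_F1[OF qm ds P] rZ by simp
  have ZQ: "Z \<subseteq> ssum P1 P2" unfolding P1_def P2_def using proj_cover[OF D ZsE] .
  have sQ: "vec.subspace (ssum P1 P2)" using PE(3) by (simp add: subspaces_iff)
  have QZ: "ssum P1 P2 \<subseteq> Z"
  proof
    fix y assume y: "y \<in> ssum P1 P2"
    show "y \<in> Z"
    proof (rule ccontr)
      assume yZ: "y \<notin> Z"
      have yE: "y \<in> E" using y PE(3) by (auto simp: subspaces_iff)
      have "\<rho> Z < \<rho> (ssum Z (vec.span {y}))" using fl yE yZ unfolding flat_def by blast
      moreover have "ssum Z (vec.span {y}) \<subseteq> ssum P1 P2" using ssum_single_le[OF sQ ZQ y] .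
      then have "\<rho> (ssum Z (vec.span {y})) \<le> \<rho> (ssum P1 P2)"
        using qm_mono[OF qm ssum_sub[OF ZE span1_subs[OF sE yE] sE] PE(3)] by blast
      ultimately show False using rQ by linarith
    qed
  qed
  have ZQe: "Z = ssum P1 P2" using ZQ QZ by blast
  have sP: "vec.subspace P1" "vec.subspace P2" "P1 \<subseteq> E1" "P2 \<subseteq> E2" using P by (auto simp: subspaces_iff)
  have "P1 \<subseteq> Z \<inter> E1" using ssum_ub1[OF sP(2), of P1] ZQe sP(3) by blast
  moreover have "Z \<inter> E1 \<subseteq> P1"
  proof
    fix z assume z: "z \<in> Z \<inter> E1"
    then have "proj1 E1 E2 z = z" using proj_E1(1)[OF D] by blast
    then show "z \<in> P1" unfolding P1_def using z by (metis IntD1 image_eqI)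
  qed
  ultimately have e1: "P1 = Z \<inter> E1" by blast
  have "P2 \<subseteq> Z \<inter> E2" using ssum_ub2[OF sP(1), of P2] ZQe sP(4) by blast
  moreover have "Z \<inter> E2 \<subseteq> P2"
  proof
    fix z assume z: "z \<in> Z \<inter> E2"
    then have "proj2 E1 E2 z = z" using proj_E2(2)[OF D] by blast
    then show "z \<in> P2" unfolding P2_def using z by (metis IntD1 image_eqI)
  qed
  ultimately have e2: "P2 = Z \<inter> E2" by blast
  show "Z = ssum (Z \<inter> E1) (Z \<inter> E2)" using ZQe e1 e2 by simp
  show "Z \<inter> E1 \<in> subspaces E1" using P(1) e1 by simp
  show "Z \<inter> E2 \<in> subspaces E2" using P(2) e2 by simp
qed

lemma cf_part1:
  assumes qm: "qmatroid E \<rho>" and ds: "is_dsum E \<rho> E1 \<rho>1 E2 \<rho>2" and fu: "full E \<rho>"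
    and Zc: "Z \<in> cyclic_flats E \<rho>"
  shows "Z \<inter> E1 \<in> cyclic_flats E \<rho>"
proof -
  have D: "internal_dsum E E1 E2" using ds_D[OF ds] .
  have sE: "vec.subspace E" using qm_E[OF qm] .
  have ZE: "Z \<in> subspaces E" using cf_subs' Zc .
  have fl: "flat E \<rho> Z" and cy: "cyclic \<rho> Z" using Zc by (auto simp: cyclic_flats_def)
  define Y1 where "Y1 = Z \<inter> E1"
  define Y2 where "Y2 = Z \<inter> E2"
  have Ze: "Z = ssum Y1 Y2" and Y: "Y1 \<in> subspaces E1" "Y2 \<in> subspaces E2"
    unfolding Y1_def Y2_def using cf_split[OF qm ds Zc] by auto
  have YE: "Y1 \<in> subspaces E" "Y2 \<in> subspaces E" using parts_subsE[OF D Y] by auto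
  have sY: "vec.subspace Y1" "vec.subspace Y2" "Y1 \<subseteq> E1" "Y2 \<subseteq> E2" using Y by (auto simp: subspaces_iff)
  have rZ: "\<rho> Z = \<rho> Y1 + \<rho> Y2" using dsum_F1[OF qm ds Y] Ze by simp
  have dZ: "vec.dim Z = vec.dim Y1 + vec.dim Y2" using dim_parts[OF D sY] Ze by simp
  have fl1: "flat E \<rho> Y1"
    unfolding flat_def
  proof (intro conjI ballI YE(1))
    fix x assume x: "x \<in> E - Y1"
    show "\<rho> Y1 < \<rho> (ssum Y1 (vec.span {x}))"
    proof (rule ccontr)
      assume nl: "\<not> ?thesis"
      define A where "A = ssum Y1 (vec.span {x})"
      have AE: "A \<in> subspaces E" unfolding A_def using ssum_sub[OF YE(1) span1_subs[OF sE, of x] sE] x by blast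
      have sA: "vec.subspace A" using AE by (simp add: subspaces_iff)
      have rA: "\<rho> A \<le> \<rho> Y1" using nl A_def by simp
      have AY2E: "ssum A Y2 \<in> subspaces E" using ssum_sub[OF AE YE(2) sE] .
      have sAY2: "vec.subspace (ssum A Y2)" using AY2E by (simp add: subspaces_iff)
      have Y1A: "Y1 \<subseteq> A" unfolding A_def using ssum_ub1[OF vec.subspace_span] .
      have xA: "x \<in> A" unfolding A_def using in_ssum_single[OF sY(1)] .
      have "ssum Z (vec.span {x}) \<subseteq> ssum A Y2"
      proof (rule ssum_single_le[OF sAY2])
        show "Z \<subseteq> ssum A Y2" using Ze ssum_mono[OF Y1A order_refl] by simp
        show "x \<in> ssum A Y2" using xA ssum_ub1[OF sY(2)] by blast
      qed
      then have "\<rho> (ssum Z (vec.span {x})) \<le> \<rho> (ssum A Y2)"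
        using qm_mono[OF qm ssum_sub[OF ZE span1_subs[OF sE, of x] sE] AY2E] x by blast
      also have "\<dots> \<le> \<rho> A + \<rho> Y2" using qm_submod_le[OF qm AE YE(2)] .
      finally have le: "\<rho> (ssum Z (vec.span {x})) \<le> \<rho> Z" using rA rZ by linarith
      have xZ: "x \<in> Z"
      proof (rule ccontr)
        assume "x \<notin> Z"
        then have "x \<in> E - Z" using x by blast
        then have "\<rho> Z < \<rho> (ssum Z (vec.span {x}))" using fl unfolding flat_def by blast
        then show False using le by linarith
      qed
      have xE: "x \<in> E" using x by blast
      have dec: "proj1 E1 E2 x + proj2 E1 E2 x = x" using proj_decomp(3)[OF D xE] .
      have p1: "proj1 E1 E2 x \<in> Y1" "proj2 E1 E2 x \<in> Y2" using proj_in_parts[OF D sY(3,4)] xZ Ze by auto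
      define b where "b = proj2 E1 E2 x"
      have b0: "b \<noteq> 0"
      proof
        assume "b = 0"
        then have "x = proj1 E1 E2 x" using dec unfolding b_def by simp
        then show False using p1(1) x by auto
      qed
      have bE2: "b \<in> E2" using p1 sY(4) unfolding b_def by blast
      have bE: "b \<in> E" using bE2 ids_E2E[OF D] by blast
      have bA: "b \<in> A"
      proof -
        have "b = x - proj1 E1 E2 x" unfolding b_def using dec by (simp add: algebra_simps)
        then show ?thesis using vec.subspace_diff[OF sA xA] Y1A p1(1) by blast
      qed
      have "ssum Y1 (vec.span {b}) \<subseteq> A" using ssum_single_le[OF sA Y1A bA] .
      then have "\<rho> (ssum Y1 (vec.span {b})) \<le> \<rho> A"
        using qm_mono[OF qm ssum_sub[OF YE(1) span1_subs[OF sE bE] sE] AE] by blast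
      moreover have "vec.span {b} \<in> subspaces E2" using span1_subs[OF ids_E2[OF D] bE2] .
      then have "\<rho> (ssum Y1 (vec.span {b})) = \<rho> Y1 + \<rho> (vec.span {b})" using dsum_F1[OF qm ds Y(1)] by blast
      moreover have "\<rho> (vec.span {b}) = 1" using full_span1[OF qm fu bE b0] .
      ultimately show False using rA by linarith
    qed
  qed
  have cy1: "cyclic \<rho> Y1"
  proof (rule strict_cyclic[OF qm YE(1)])
    fix U assume U: "vec.subspace U" "U \<subseteq> Y1" "U \<noteq> Y1"
    have UE1: "U \<in> subspaces E1" using U sY by (auto simp: subspaces_iff)
    have UY2E: "ssum U Y2 \<in> subspaces E" using parts_subsE[OF D UE1 Y(2)] by auto
    have sUY2: "vec.subspace (ssum U Y2)" using UY2E by (simp add: subspaces_iff)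
    have dU: "vec.dim U < vec.dim Y1" using dim_lt[OF U(1) sY(1) U(2,3)] .
    have dUY2: "vec.dim (ssum U Y2) = vec.dim U + vec.dim Y2" using dim_parts[OF D U(1) sY(2)] U(2) sY by blast
    have sub: "ssum U Y2 \<subseteq> Z" using Ze ssum_mono[OF U(2) order_refl] by simp
    have ne: "ssum U Y2 \<noteq> Z" using dUY2 dZ dU by auto
    have "\<rho> Z + vec.dim (ssum U Y2) + 1 \<le> \<rho> (ssum U Y2) + vec.dim Z"
      using cyclic_strict[OF qm ZE cy sUY2 sub ne] .
    moreover have "\<rho> (ssum U Y2) = \<rho> U + \<rho> Y2" using dsum_F1[OF qm ds UE1 Y(2)] .
    ultimately show "\<rho> Y1 + vec.dim U + 1 \<le> \<rho> U + vec.dim Y1" using rZ dZ dUY2 by linarith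
  qed
  show ?thesis unfolding cyclic_flats_def Y1_def[symmetric] using fl1 cy1 by blast
qed

lemma cf_part2:
  assumes qm: "qmatroid E \<rho>" and ds: "is_dsum E \<rho> E1 \<rho>1 E2 \<rho>2" and fu: "full E \<rho>"
    and Zc: "Z \<in> cyclic_flats E \<rho>"
  shows "Z \<inter> E2 \<in> cyclic_flats E \<rho>"
  using cf_part1[OF qm ds_swap[OF ds] fu Zc] .


lemma cf_subs'': "Z \<in> cyclic_flats E \<rho> \<Longrightarrow> Z \<in> subspaces E"
  by (simp add: cyclic_flats_def flat_def)

lemma flat_lower:
  assumes qm: "qmatroid E \<rho>" and fl: "flat E \<rho> F" and U: "U \<in> subspaces E" and nU: "\<not> U \<subseteq> F"
  shows "\<rho> (U \<inter> F) + 1 \<le> \<rho> U"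
proof -
  have sE: "vec.subspace E" using qm_E[OF qm] .
  have FE: "F \<in> subspaces E" using fl by (simp add: flat_def)
  have sU: "vec.subspace U" and UsE: "U \<subseteq> E" using U by (auto simp: subspaces_iff)
  obtain u where u: "u \<in> U" "u \<notin> F" using nU by blast
  have uE: "u \<in> E" using u UsE by blast
  have UF: "U \<inter> F \<in> subspaces E" using inter_sub[OF U FE] .
  have sUF: "vec.subspace (U \<inter> F)" using UF by (simp add: subspaces_iff)
  define B where "B = ssum (U \<inter> F) (vec.span {u})"
  have BU: "B \<subseteq> U" unfolding B_def using ssum_single_le[OF sU _ u(1)] by blast
  have BE: "B \<in> subspaces E" unfolding B_def using ssum_sub[OF UF span1_subs[OF sE uE] sE] .
  have 1: "\<rho> (ssum F B) + \<rho> (F \<inter> B) \<le> \<rho> F + \<rho> B" using qm_submod[OF qm FE BE] .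
  have "vec.span {u} \<subseteq> B" unfolding B_def using ssum_ub2[OF sUF] .
  then have "ssum F (vec.span {u}) \<subseteq> ssum F B" using ssum_mono by blast
  then have 2: "\<rho> (ssum F (vec.span {u})) \<le> \<rho> (ssum F B)"
    using qm_mono[OF qm ssum_sub[OF FE span1_subs[OF sE uE] sE] ssum_sub[OF FE BE sE]] by blast
  have 3: "\<rho> F < \<rho> (ssum F (vec.span {u}))" using fl uE u(2) unfolding flat_def by blast
  have "U \<inter> F \<subseteq> F \<inter> B" unfolding B_def using ssum_ub1[OF vec.subspace_span] by blast
  then have 4: "\<rho> (U \<inter> F) \<le> \<rho> (F \<inter> B)" using qm_mono[OF qm UF inter_sub[OF FE BE]] by blast
  have 5: "\<rho> B \<le> \<rho> U" using qm_mono[OF qm BE U BU] .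
  show ?thesis using 1 2 3 4 5 by linarith
qed

lemma cf_sum:
  assumes qm: "qmatroid E \<rho>" and ds: "is_dsum E \<rho> E1 \<rho>1 E2 \<rho>2"
    and Y1c: "Y1 \<in> cyclic_flats E \<rho>" and Y1s: "Y1 \<subseteq> E1"
    and Y2c: "Y2 \<in> cyclic_flats E \<rho>" and Y2s: "Y2 \<subseteq> E2"
  shows "ssum Y1 Y2 \<in> cyclic_flats E \<rho>"
proof -
  have D: "internal_dsum E E1 E2" using ds_D[OF ds] .
  have sE: "vec.subspace E" using qm_E[OF qm] .
  have YE: "Y1 \<in> subspaces E" "Y2 \<in> subspaces E" using cf_subs'' Y1c Y2c by auto
  have sY: "vec.subspace Y1" "vec.subspace Y2" using YE by (auto simp: subspaces_iff)
  have Y: "Y1 \<in> subspaces E1" "Y2 \<in> subspaces E2" using sY Y1s Y2s by (auto simp: subspaces_iff)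
  have fl: "flat E \<rho> Y1" "flat E \<rho> Y2" and cy: "cyclic \<rho> Y1" "cyclic \<rho> Y2"
    using Y1c Y2c by (auto simp: cyclic_flats_def)
  define Z where "Z = ssum Y1 Y2"
  have ZE: "Z \<in> subspaces E" unfolding Z_def using ssum_sub[OF YE sE] .
  have sZ: "vec.subspace Z" using ZE by (simp add: subspaces_iff)
  have rZ: "\<rho> Z = \<rho> Y1 + \<rho> Y2" unfolding Z_def using dsum_F1[OF qm ds Y] .
  have dZ: "vec.dim Z = vec.dim Y1 + vec.dim Y2" unfolding Z_def using dim_parts[OF D sY Y1s Y2s] .
  have flZ: "flat E \<rho> Z"
    unfolding flat_def
  proof (intro conjI ballI ZE)
    fix x assume x: "x \<in> E - Z"
    define V where "V = ssum Z (vec.span {x})"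
    have VE: "V \<in> subspaces E" unfolding V_def using ssum_sub[OF ZE span1_subs[OF sE, of x] sE] x by blast
    have sV: "vec.subspace V" using VE by (simp add: subspaces_iff)
    have dV: "vec.dim V = vec.dim Z + 1" unfolding V_def using dim_ssum_single_notin[OF sZ] x by blast
    have ZV: "Z \<subseteq> V" unfolding V_def using ssum_ub1[OF vec.subspace_span] .
    obtain X where X: "X \<in> subspaces V"
      "\<rho> V + vec.dim X = \<rho> (proj1 E1 E2 ` X) + \<rho> (proj2 E1 E2 ` X) + vec.dim V"
      using dsum_exact[OF ds VE] by blast
    have XE: "X \<in> subspaces E" using subs_trans X(1) VE by blast
    have sX: "vec.subspace X" and XV: "X \<subseteq> V" and XsE: "X \<subseteq> E" using X(1) VE by (auto simp: subspaces_iff)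
    define U1 where "U1 = proj1 E1 E2 ` X"
    define U2 where "U2 = proj2 E1 E2 ` X"
    have UE: "U1 \<in> subspaces E" "U2 \<in> subspaces E" unfolding U1_def U2_def using proj_img_subsE[OF D XE] by auto
    have I: "U1 \<inter> Y1 \<in> subspaces E" "U2 \<inter> Y2 \<in> subspaces E" using inter_sub UE YE by blast+
    have sI: "vec.subspace (U1 \<inter> Y1)" "vec.subspace (U2 \<inter> Y2)" using I by (auto simp: subspaces_iff)
    have c1: "\<rho> Y1 + vec.dim (U1 \<inter> Y1) \<le> \<rho> (U1 \<inter> Y1) + vec.dim Y1" using qm_R2[OF qm I(1) YE(1)] by blast
    have c2: "\<rho> Y2 + vec.dim (U2 \<inter> Y2) \<le> \<rho> (U2 \<inter> Y2) + vec.dim Y2" using qm_R2[OF qm I(2) YE(2)] by blast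
    have m1: "\<rho> (U1 \<inter> Y1) \<le> \<rho> U1" using qm_mono[OF qm I(1) UE(1)] by blast
    have m2: "\<rho> (U2 \<inter> Y2) \<le> \<rho> U2" using qm_mono[OF qm I(2) UE(2)] by blast
    have XZsub: "X \<inter> Z \<subseteq> ssum (U1 \<inter> Y1) (U2 \<inter> Y2)"
    proof
      fix z assume z: "z \<in> X \<inter> Z"
      have zE: "z \<in> E" using z XsE by blast
      have "proj1 E1 E2 z \<in> Y1" "proj2 E1 E2 z \<in> Y2" using proj_in_parts[OF D Y1s Y2s] z unfolding Z_def by auto
      moreover have "proj1 E1 E2 z \<in> U1" "proj2 E1 E2 z \<in> U2" unfolding U1_def U2_def using z by blast+
      moreover have "z = proj1 E1 E2 z + proj2 E1 E2 z" using proj_decomp(3)[OF D zE] by simp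
      ultimately show "z \<in> ssum (U1 \<inter> Y1) (U2 \<inter> Y2)" unfolding ssum_def by blast
    qed
    have dXZ: "vec.dim (X \<inter> Z) \<le> vec.dim (U1 \<inter> Y1) + vec.dim (U2 \<inter> Y2)"
      using dim_le[OF XZsub] dim_ssum_le[OF sI] by linarith
    have "ssum X Z \<subseteq> V" using ssum_least[OF sV XV ZV] .
    then have "vec.dim (ssum X Z) \<le> vec.dim V" by (rule dim_le)
    moreover have "vec.dim (ssum X Z) + vec.dim (X \<inter> Z) = vec.dim X + vec.dim Z" using dim_ssum[OF sX sZ] .
    ultimately have dX: "vec.dim X \<le> vec.dim (X \<inter> Z) + 1" using dV by linarith
    have X0: "\<rho> V + vec.dim X = \<rho> U1 + \<rho> U2 + vec.dim V" using X(2) unfolding U1_def U2_def .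
    show "\<rho> Z < \<rho> V"
    proof (cases "X \<subseteq> Z")
      case True
      then have "vec.dim X \<le> vec.dim (X \<inter> Z)" by (simp add: Int_absorb2)
      then show ?thesis using X0 c1 c2 m1 m2 dXZ dV dZ rZ by linarith
    next
      case False
      have "\<not> U1 \<subseteq> Y1 \<or> \<not> U2 \<subseteq> Y2"
      proof (rule ccontr)
        assume "\<not> ?thesis"
        then have "ssum U1 U2 \<subseteq> Z" unfolding Z_def using ssum_mono by blast
        moreover have "X \<subseteq> ssum U1 U2" unfolding U1_def U2_def using proj_cover[OF D XsE] .
        ultimately show False using False by blast
      qed
      then show ?thesis
      proof
        assume "\<not> U1 \<subseteq> Y1"
        then have "\<rho> (U1 \<inter> Y1) + 1 \<le> \<rho> U1" using flat_lower[OF qm fl(1) UE(1)] by blast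
        then show ?thesis using X0 c1 c2 m2 dXZ dX dV dZ rZ by linarith
      next
        assume "\<not> U2 \<subseteq> Y2"
        then have "\<rho> (U2 \<inter> Y2) + 1 \<le> \<rho> U2" using flat_lower[OF qm fl(2) UE(2)] by blast
        then show ?thesis using X0 c1 c2 m1 dXZ dX dV dZ rZ by linarith
      qed
    qed
  qed
  have cyZ: "cyclic \<rho> Z"
  proof (rule strict_cyclic[OF qm ZE])
    fix U assume U: "vec.subspace U" "U \<subseteq> Z" "U \<noteq> Z"
    have UE: "U \<in> subspaces E" using U ZE by (auto simp: subspaces_iff)
    obtain X where X: "X \<in> subspaces U"
      "\<rho> U + vec.dim X = \<rho> (proj1 E1 E2 ` X) + \<rho> (proj2 E1 E2 ` X) + vec.dim U"
      using dsum_exact[OF ds UE] by blast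
    have XE: "X \<in> subspaces E" using subs_trans X(1) UE by blast
    have sX: "vec.subspace X" and XU: "X \<subseteq> U" and XsE: "X \<subseteq> E" using X(1) UE by (auto simp: subspaces_iff)
    define U1 where "U1 = proj1 E1 E2 ` X"
    define U2 where "U2 = proj2 E1 E2 ` X"
    have UiE: "U1 \<in> subspaces E" "U2 \<in> subspaces E" unfolding U1_def U2_def using proj_img_subsE[OF D XE] by auto
    have sUi: "vec.subspace U1" "vec.subspace U2" using UiE by (auto simp: subspaces_iff)
    have UiY: "U1 \<subseteq> Y1" "U2 \<subseteq> Y2" unfolding U1_def U2_def
      using proj_img_parts[OF D Y1s Y2s] XU U(2) unfolding Z_def by blast+
    have c1: "\<rho> Y1 + vec.dim U1 \<le> \<rho> U1 + vec.dim Y1" using qm_R2[OF qm UiE(1) YE(1) UiY(1)] .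
    have c2: "\<rho> Y2 + vec.dim U2 \<le> \<rho> U2 + vec.dim Y2" using qm_R2[OF qm UiE(2) YE(2) UiY(2)] .
    have dP: "vec.dim X \<le> vec.dim U1 + vec.dim U2" unfolding U1_def U2_def using dim_proj[OF D XE] .
    have X0: "\<rho> U + vec.dim X = \<rho> U1 + \<rho> U2 + vec.dim U" using X(2) unfolding U1_def U2_def .
    show "\<rho> Z + vec.dim U + 1 \<le> \<rho> U + vec.dim Z"
    proof (cases "vec.dim X < vec.dim U1 + vec.dim U2")
      case True
      then show ?thesis using X0 c1 c2 dZ rZ by linarith
    next
      case False
      then have deq: "vec.dim X = vec.dim U1 + vec.dim U2" using dP by linarith
      have XS: "X \<subseteq> ssum U1 U2" unfolding U1_def U2_def using proj_cover[OF D XsE] .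
      have sS: "vec.subspace (ssum U1 U2)" using subspace_ssum[OF sUi] .
      have "X = ssum U1 U2" using dim_eq_sub[OF sX sS XS] dim_ssum_le[OF sUi] deq by linarith
      have "\<not> (U1 = Y1 \<and> U2 = Y2)"
      proof
        assume "U1 = Y1 \<and> U2 = Y2"
        then have "X = Z" using \<open>X = ssum U1 U2\<close> unfolding Z_def by simp
        then show False using XU U(2,3) by blast
      qed
      then show ?thesis
      proof (cases "U1 = Y1")
        case False
        then have "\<rho> Y1 + vec.dim U1 + 1 \<le> \<rho> U1 + vec.dim Y1"
          using cyclic_strict[OF qm YE(1) cy(1) sUi(1) UiY(1)] by blast
        then show ?thesis using X0 c2 dZ rZ deq by linarith
      next
        case True
        then have "U2 \<noteq> Y2" using \<open>\<not> (U1 = Y1 \<and> U2 = Y2)\<close> by blast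
        then have "\<rho> Y2 + vec.dim U2 + 1 \<le> \<rho> U2 + vec.dim Y2"
          using cyclic_strict[OF qm YE(2) cy(2) sUi(2) UiY(2)] by blast
        then show ?thesis using X0 c1 dZ rZ deq by linarith
      qed
    qed
  qed
  show ?thesis unfolding cyclic_flats_def Z_def[symmetric] using flZ cyZ by blast
qed


theorem theorem7p13:
  fixes E :: "(('a::{field,finite}) ^ ('n::finite)) set"
    and \<rho> :: "('a ^ 'n) set \<Rightarrow> nat"
  assumes "qmatroid E \<rho>"
    and "vec.dim E \<ge> 2"
  shows "irreducible_qm E \<rho> \<longleftrightarrow>
    (full E \<rho> \<and>
     \<not> (\<exists>Z1 Z2. Z1 \<in> cyclic_flats E \<rho> \<and> Z2 \<in> cyclic_flats E \<rho> \<and>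
            Z1 \<noteq> {0} \<and> Z2 \<noteq> {0} \<and>
            ssum Z1 Z2 = E \<and> Z1 \<inter> Z2 = {0} \<and>
            \<rho> Z1 + \<rho> Z2 = \<rho> E \<and>
            {ssum Y1 Y2 | Y1 Y2. Y1 \<in> {Z \<in> cyclic_flats E \<rho>. Z \<subseteq> Z1} \<and>
                                Y2 \<in> {Z \<in> cyclic_flats E \<rho>. Z \<subseteq> Z2}}
              = cyclic_flats E \<rho>))"
proof
  have qm: "qmatroid E \<rho>" and d2: "vec.dim E \<ge> 2" using assms by auto
  assume irr: "irreducible_qm E \<rho>"
  then have nr: "\<not> reducible E \<rho>" by (simp add: irreducible_qm_def)
  have fu: "full E \<rho>" using notfull_reducible[OF qm d2] nr by blast
  show "full E \<rho> \<and>
     \<not> (\<exists>Z1 Z2. Z1 \<in> cyclic_flats E \<rho> \<and> Z2 \<in> cyclic_flats E \<rho> \<and>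
            Z1 \<noteq> {0} \<and> Z2 \<noteq> {0} \<and>
            ssum Z1 Z2 = E \<and> Z1 \<inter> Z2 = {0} \<and>
            \<rho> Z1 + \<rho> Z2 = \<rho> E \<and>
            {ssum Y1 Y2 | Y1 Y2. Y1 \<in> {Z \<in> cyclic_flats E \<rho>. Z \<subseteq> Z1} \<and>
                                Y2 \<in> {Z \<in> cyclic_flats E \<rho>. Z \<subseteq> Z2}}
              = cyclic_flats E \<rho>)"
  proof (intro conjI fu notI)
    assume "\<exists>Z1 Z2. Z1 \<in> cyclic_flats E \<rho> \<and> Z2 \<in> cyclic_flats E \<rho> \<and>
            Z1 \<noteq> {0} \<and> Z2 \<noteq> {0} \<and>
            ssum Z1 Z2 = E \<and> Z1 \<inter> Z2 = {0} \<and>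
            \<rho> Z1 + \<rho> Z2 = \<rho> E \<and>
            {ssum Y1 Y2 | Y1 Y2. Y1 \<in> {Z \<in> cyclic_flats E \<rho>. Z \<subseteq> Z1} \<and>
                                Y2 \<in> {Z \<in> cyclic_flats E \<rho>. Z \<subseteq> Z2}}
              = cyclic_flats E \<rho>"
    then obtain Z1 Z2 where Z: "Z1 \<in> cyclic_flats E \<rho>" "Z2 \<in> cyclic_flats E \<rho>"
       "Z1 \<noteq> {0}" "Z2 \<noteq> {0}" "ssum Z1 Z2 = E" "Z1 \<inter> Z2 = {0}" "\<rho> Z1 + \<rho> Z2 = \<rho> E"
       "{ssum Y1 Y2 | Y1 Y2. Y1 \<in> {Z \<in> cyclic_flats E \<rho>. Z \<subseteq> Z1} \<and>
                                Y2 \<in> {Z \<in> cyclic_flats E \<rho>. Z \<subseteq> Z2}}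
              = cyclic_flats E \<rho>" by blast
    have "is_dsum E \<rho> Z1 \<rho> Z2 \<rho>" using cf_decomp_dsum[OF qm Z(1,2,5,6,7,8)] .
    then have "reducible E \<rho>" unfolding reducible_def using Z(3,4) by blast
    then show False using nr by blast
  qed
next
  have qm: "qmatroid E \<rho>" and d2: "vec.dim E \<ge> 2" using assms by auto
  assume R: "full E \<rho> \<and>
     \<not> (\<exists>Z1 Z2. Z1 \<in> cyclic_flats E \<rho> \<and> Z2 \<in> cyclic_flats E \<rho> \<and>
            Z1 \<noteq> {0} \<and> Z2 \<noteq> {0} \<and>
            ssum Z1 Z2 = E \<and> Z1 \<inter> Z2 = {0} \<and>
            \<rho> Z1 + \<rho> Z2 = \<rho> E \<and>
            {ssum Y1 Y2 | Y1 Y2. Y1 \<in> {Z \<in> cyclic_flats E \<rho>. Z \<subseteq> Z1} \<and>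
                                Y2 \<in> {Z \<in> cyclic_flats E \<rho>. Z \<subseteq> Z2}}
              = cyclic_flats E \<rho>)"
  then have fu: "full E \<rho>" by blast
  show "irreducible_qm E \<rho>"
    unfolding irreducible_qm_def
  proof
    assume "reducible E \<rho>"
    then obtain E1 E2 \<rho>1 \<rho>2 where E0: "E1 \<noteq> {0}" "E2 \<noteq> {0}" and ds: "is_dsum E \<rho> E1 \<rho>1 E2 \<rho>2"
      unfolding reducible_def by blast
    have D: "internal_dsum E E1 E2" using ds_D[OF ds] .
    have Ec: "E \<in> cyclic_flats E \<rho>" using full_E_cf[OF qm fu] .
    have "E \<inter> E1 = E1" using ids_E1E[OF D] by blast
    then have E1c: "E1 \<in> cyclic_flats E \<rho>" using cf_part1[OF qm ds fu Ec] by simp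
    have "E \<inter> E2 = E2" using ids_E2E[OF D] by blast
    then have E2c: "E2 \<in> cyclic_flats E \<rho>" using cf_part2[OF qm ds fu Ec] by simp
    have s: "ssum E1 E2 = E" and i: "E1 \<inter> E2 = {0}" using D by (auto simp: internal_dsum_def)
    have E1s: "E1 \<in> subspaces E1" "E2 \<in> subspaces E2" using ids_E1[OF D] ids_E2[OF D] by (auto simp: subspaces_iff)
    have r: "\<rho> E1 + \<rho> E2 = \<rho> E" using dsum_F1[OF qm ds E1s] s by simp
    have eqs: "{ssum Y1 Y2 | Y1 Y2. Y1 \<in> {Z \<in> cyclic_flats E \<rho>. Z \<subseteq> E1} \<and>
                                Y2 \<in> {Z \<in> cyclic_flats E \<rho>. Z \<subseteq> E2}}
              = cyclic_flats E \<rho>"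
    proof
      show "{ssum Y1 Y2 | Y1 Y2. Y1 \<in> {Z \<in> cyclic_flats E \<rho>. Z \<subseteq> E1} \<and>
                                Y2 \<in> {Z \<in> cyclic_flats E \<rho>. Z \<subseteq> E2}} \<subseteq> cyclic_flats E \<rho>"
        using cf_sum[OF qm ds] by blast
      show "cyclic_flats E \<rho> \<subseteq> {ssum Y1 Y2 | Y1 Y2. Y1 \<in> {Z \<in> cyclic_flats E \<rho>. Z \<subseteq> E1} \<and>
                                Y2 \<in> {Z \<in> cyclic_flats E \<rho>. Z \<subseteq> E2}}"
      proof
        fix Z assume Zc: "Z \<in> cyclic_flats E \<rho>"
        have "Z = ssum (Z \<inter> E1) (Z \<inter> E2)" using cf_split[OF qm ds Zc] by blast
        moreover have "Z \<inter> E1 \<in> {Z \<in> cyclic_flats E \<rho>. Z \<subseteq> E1}" using cf_part1[OF qm ds fu Zc] by blast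
        moreover have "Z \<inter> E2 \<in> {Z \<in> cyclic_flats E \<rho>. Z \<subseteq> E2}" using cf_part2[OF qm ds fu Zc] by blast
        ultimately show "Z \<in> {ssum Y1 Y2 | Y1 Y2. Y1 \<in> {Z \<in> cyclic_flats E \<rho>. Z \<subseteq> E1} \<and>
                                Y2 \<in> {Z \<in> cyclic_flats E \<rho>. Z \<subseteq> E2}}" by blast
      qed
    qed
    show False using R E1c E2c E0 s i r eqs by blast
  qed
qed

end
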